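(* Let $G$ be an $l$-group with left Haar measure $dg$, $V$ a smooth $G$-module and $n\ge1$. Define $T_n:C_c^\infty(G^{n+1},V)\to C_c^\infty(G^n,V)$ by $$(T_nf)(g_1,\dots,g_n)=\int_Gg^{-1}f(g,gg_1,gg_1g_2,\dots,gg_1\cdots g_n)\,dg.$$ Then $T_n$ is surjective and its kernel is spanned by the elements $g.f-f$, $g\in G$, $f\in C_c^\infty(G^{n+1},V)$, where $(g.f)(g_0,\dots,g_n)=g\,f(g^{-1}g_0,\dots,g^{-1}g_n)$.
   Context: An $l$-group: locally compact group, countable at infinity, with a basis of neighbourhoods of $e$ of compact open subgroups. Smooth module: every vector fixed by a compact open subgroup. $C_c^\infty(Y,V)$: locally constant compactly supported functions $Y\to V$. *)

theory Defs
  imports "HOL-Analysis.Analysis" "HOL-Library.Function_Algebras"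
begin

text \<open>The group G is a type 'g of class topological_group_add (a not necessarily
commutative topological group, written additively: g + h is the product gh,
- g the inverse, 0 the identity).\<close>

definition is_subgroup :: "'g::group_add set \<Rightarrow> bool" where
  "is_subgroup K \<longleftrightarrow> 0 \<in> K \<and> (\<forall>a\<in>K. \<forall>b\<in>K. a + b \<in> K) \<and> (\<forall>a\<in>K. - a \<in> K)"

definition l_group :: "'g::{topological_group_add,t2_space} itself \<Rightarrow> bool" where
  "l_group _ \<longleftrightarrow>
     (\<forall>x::'g. \<exists>U K. open U \<and> compact K \<and> x \<in> U \<and> U \<subseteq> K) \<and>
     (\<exists>C::nat \<Rightarrow> 'g set. (\<forall>i. compact (C i)) \<and> (\<Union>i. C i) = UNIV) \<and>
     (\<forall>U::'g set. open U \<and> 0 \<in> U \<longrightarrow>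
        (\<exists>K. compact K \<and> open K \<and> is_subgroup K \<and> K \<subseteq> U))"

definition left_haar_measure :: "'g::topological_group_add measure \<Rightarrow> bool" where
  "left_haar_measure M \<longleftrightarrow>
     sets M = sets borel \<and>
     (\<forall>g. \<forall>A\<in>sets M. emeasure M ((+) g ` A) = emeasure M A) \<and>
     (\<forall>K. compact K \<longrightarrow> emeasure M K < \<infinity>) \<and>
     (\<forall>U. open U \<and> U \<noteq> {} \<longrightarrow> emeasure M U > 0) \<and>
     (\<forall>A\<in>sets M. emeasure M A = (INF U\<in>{U. open U \<and> A \<subseteq> U}. emeasure M U)) \<and>
     (\<forall>U. open U \<longrightarrow> emeasure M U = (SUP K\<in>{K. compact K \<and> K \<subseteq> U}. emeasure M K))"

definition smooth_module :: "(complex \<Rightarrow> 'v::ab_group_add \<Rightarrow> 'v) \<Rightarrow> ('g::{topological_group_add} \<Rightarrow> 'v \<Rightarrow> 'v) \<Rightarrow> bool" where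
  "smooth_module sc act \<longleftrightarrow>
     vector_space sc \<and>
     (\<forall>g. Vector_Spaces.linear sc sc (act g)) \<and>
     (\<forall>v. act 0 v = v) \<and>
     (\<forall>g h v. act (g + h) v = act g (act h v)) \<and>
     (\<forall>v. \<exists>K. compact K \<and> open K \<and> is_subgroup K \<and> (\<forall>k\<in>K. act k v = v))"

text \<open>C_c^infty(Y,V): locally constant, compactly supported functions on the
topological space Y (extended by 0 outside the carrier).\<close>
definition Cc_infty :: "'a topology \<Rightarrow> ('a \<Rightarrow> 'v::zero) set" where
  "Cc_infty Y = {f.
     (\<forall>y\<in>topspace Y. \<exists>U. openin Y U \<and> y \<in> U \<and> (\<forall>z\<in>U. f z = f y)) \<and>
     (\<exists>K. compactin Y K \<and> (\<forall>y\<in>topspace Y - K. f y = 0)) \<and>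
     (\<forall>y. y \<notin> topspace Y \<longrightarrow> f y = 0)}"

text \<open>G^n as functions on {0..<n} with the product topology.\<close>
abbreviation Gpow :: "nat \<Rightarrow> (nat \<Rightarrow> 'g::topological_space) topology" where
  "Gpow n \<equiv> product_topology (\<lambda>_. euclidean) {..<n}"

text \<open>Integral of a locally constant compactly supported V-valued function
(a simple function): sum over its nonzero values v of measure(f^{-1}(v)) v.\<close>
definition haar_int :: "(complex \<Rightarrow> 'v::ab_group_add \<Rightarrow> 'v) \<Rightarrow> 'g measure \<Rightarrow> ('g \<Rightarrow> 'v) \<Rightarrow> 'v" where
  "haar_int sc M f = (\<Sum>v\<in>range f - {0}. sc (complex_of_real (measure M (f -` {v}))) v)"

text \<open>Prefix products: pprod x i = x_1 ... x_i (x_1 is stored at index 0).\<close>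
fun pprod :: "(nat \<Rightarrow> 'g::monoid_add) \<Rightarrow> nat \<Rightarrow> 'g" where
  "pprod x 0 = 0"
| "pprod x (Suc i) = pprod x i + x i"

definition T_op :: "(complex \<Rightarrow> 'v::ab_group_add \<Rightarrow> 'v) \<Rightarrow> 'g::topological_group_add measure \<Rightarrow> ('g \<Rightarrow> 'v \<Rightarrow> 'v)
    \<Rightarrow> nat \<Rightarrow> ((nat \<Rightarrow> 'g) \<Rightarrow> 'v) \<Rightarrow> (nat \<Rightarrow> 'g) \<Rightarrow> 'v" where
  "T_op sc M act n f x =
     (if x \<in> topspace (Gpow n)
      then haar_int sc M (\<lambda>g. act (- g) (f (restrict (\<lambda>i. g + pprod x i) {..<Suc n})))
      else 0)"

definition G_act_fun :: "('g::topological_group_add \<Rightarrow> 'v::ab_group_add \<Rightarrow> 'v) \<Rightarrow> nat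
    \<Rightarrow> 'g \<Rightarrow> ((nat \<Rightarrow> 'g) \<Rightarrow> 'v) \<Rightarrow> (nat \<Rightarrow> 'g) \<Rightarrow> 'v" where
  "G_act_fun act m g f x =
     (if x \<in> topspace (Gpow m) then act g (f (restrict (\<lambda>i. - g + x i) {..<m})) else 0)"

abbreviation fun_cspan :: "(complex \<Rightarrow> 'v::ab_group_add \<Rightarrow> 'v) \<Rightarrow> ('a \<Rightarrow> 'v) set \<Rightarrow> ('a \<Rightarrow> 'v) set" where
  "fun_cspan sc S \<equiv> module.span (\<lambda>c f x. sc c (f x)) S"

end

theory Submission
  imports Defs
begin


lemma cm_add:
  fixes f g :: "'a \<Rightarrow> 'g::topological_monoid_add"
  shows "continuous_map X euclidean f \<Longrightarrow> continuous_map X euclidean g \<Longrightarrow> continuous_map X euclidean (\<lambda>x. f x + g x)"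
  by (simp add: continuous_map_atin tendsto_add)

lemma cm_minus:
  fixes f :: "'a \<Rightarrow> 'g::topological_group_add"
  shows "continuous_map X euclidean f \<Longrightarrow> continuous_map X euclidean (\<lambda>x. - f x)"
  by (simp add: continuous_map_atin tendsto_minus)

definition cog :: "'g::topological_group_add set \<Rightarrow> bool" where
  "cog K \<longleftrightarrow> compact K \<and> open K \<and> is_subgroup K"

lemma mem_coset: "(x::'g::group_add) \<in> (+) a ` K \<longleftrightarrow> - a + x \<in> K"
proof
  assume "x \<in> (+) a ` K" then show "- a + x \<in> K" by auto
next
  assume "- a + x \<in> K" then have "a + (- a + x) \<in> (+) a ` K" by blast
  then show "x \<in> (+) a ` K" by simp
qed

lemma coset_self: "is_subgroup K \<Longrightarrow> (a::'g::group_add) \<in> (+) a ` K"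
  by (simp add: mem_coset is_subgroup_def)

lemma coset_eq:
  assumes "is_subgroup K" "(x::'g::group_add) \<in> (+) a ` K"
  shows "(+) x ` K = (+) a ` K"
proof -
  have k: "- a + x \<in> K" "- (- a + x) \<in> K" using assms by (auto simp: mem_coset is_subgroup_def)
  have e1: "- a + y = (- a + x) + (- x + y)" for y by (simp add: add.assoc)
  have e2: "- x + y = - (- a + x) + (- a + y)" for y by (simp add: add.assoc minus_add)
  show ?thesis
  proof (rule set_eqI)
    fix y
    show "y \<in> (+) x ` K \<longleftrightarrow> y \<in> (+) a ` K"
      unfolding mem_coset using assms(1) k e1 e2 unfolding is_subgroup_def by metis
  qed
qed

lemma coset_meet:
  assumes "is_subgroup K" "(+) (a::'g::group_add) ` K \<inter> (+) b ` K \<noteq> {}"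
  shows "(+) a ` K = (+) b ` K"
proof -
  obtain x where "x \<in> (+) a ` K" "x \<in> (+) b ` K" using assms(2) by blast
  then show ?thesis using coset_eq[OF assms(1)] by metis
qed

lemma coset_iff:
  assumes "is_subgroup K"
  shows "(x::'g::group_add) \<in> (+) a ` K \<longleftrightarrow> (+) x ` K = (+) a ` K"
  using coset_eq[OF assms] coset_self[OF assms] by metis

lemma open_coset: "open K \<Longrightarrow> open ((+) (a::'g::topological_group_add) ` K)"
proof -
  assume "open K"
  have "(+) a ` K = (\<lambda>x. - a + x) -` K" by (auto simp: mem_coset)
  moreover have "continuous_on UNIV (\<lambda>x. - a + x)" by (intro continuous_intros)
  then have "open ((\<lambda>x. - a + x) -` K)"
    using continuous_on_open_vimage[OF open_UNIV] \<open>open K\<close> by auto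
  ultimately show ?thesis by simp
qed

lemma compact_coset: "compact K \<Longrightarrow> compact ((+) (a::'g::topological_group_add) ` K)"
  by (rule compact_continuous_image) (intro continuous_intros, assumption)

lemma cog_Int: "cog K1 \<Longrightarrow> cog K2 \<Longrightarrow> cog (K1 \<inter> (K2::'g::{topological_group_add,t2_space} set))"
  unfolding cog_def is_subgroup_def
  by (auto intro!: compact_Int_closed compact_imp_closed)

lemma cog_INT:
  assumes "cog (K0::'g::{topological_group_add,t2_space} set)" "finite P" "\<And>p. p \<in> P \<Longrightarrow> cog (Kp p)"
  shows "cog (K0 \<inter> (\<Inter>p\<in>P. Kp p))"
proof -
  have "\<forall>p\<in>P. closed (Kp p)" using assms(3) by (simp add: cog_def compact_imp_closed)
  then have "closed (\<Inter>p\<in>P. Kp p)" by (rule closed_INT)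
  moreover have "compact K0" using assms(1) by (simp add: cog_def)
  ultimately have "compact (K0 \<inter> (\<Inter>p\<in>P. Kp p))" using compact_Int_closed by blast
  moreover have "open (K0 \<inter> (\<Inter>p\<in>P. Kp p))" using assms by (auto simp: cog_def)
  moreover have "is_subgroup (K0 \<inter> (\<Inter>p\<in>P. Kp p))" using assms(1,3) by (auto simp: cog_def is_subgroup_def)
  ultimately show ?thesis by (simp add: cog_def)
qed

lemma exists_cog:
  assumes "l_group TYPE('g::{topological_group_add,t2_space})" "open U" "(0::'g) \<in> U"
  shows "\<exists>K. cog K \<and> K \<subseteq> U"
  using assms unfolding l_group_def cog_def by blast

lemma cog_0: "cog K \<Longrightarrow> 0 \<in> K" by (simp add: cog_def is_subgroup_def)

definition lc :: "'a topology \<Rightarrow> ('a \<Rightarrow> 'b) \<Rightarrow> bool" where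
  "lc X f \<longleftrightarrow> (\<forall>y\<in>topspace X. \<exists>U. openin X U \<and> y \<in> U \<and> (\<forall>z\<in>U. f z = f y))"

lemma Cc_infty_iff: "f \<in> Cc_infty Y \<longleftrightarrow> lc Y f \<and> (\<exists>K. compactin Y K \<and> (\<forall>y\<in>topspace Y - K. f y = 0))
   \<and> (\<forall>y. y \<notin> topspace Y \<longrightarrow> f y = 0)"
  by (simp add: Cc_infty_def lc_def)

lemma lc_comp:
  assumes "lc Y f" "continuous_map X Y h"
  shows "lc X (\<lambda>x. f (h x))"
  unfolding lc_def
proof
  fix y assume y: "y \<in> topspace X"
  then have "h y \<in> topspace Y" using assms(2) continuous_map_image_subset_topspace by blast
  then obtain U where U: "openin Y U" "h y \<in> U" "\<forall>z\<in>U. f z = f (h y)" using assms(1) unfolding lc_def by blast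
  have "openin X {x \<in> topspace X. h x \<in> U}" using openin_continuous_map_preimage[OF assms(2) U(1)] .
  moreover have "y \<in> {x \<in> topspace X. h x \<in> U}" using y U(2) by blast
  moreover have "\<forall>z\<in>{x \<in> topspace X. h x \<in> U}. f (h z) = f (h y)" using U(3) by blast
  ultimately show "\<exists>U. openin X U \<and> y \<in> U \<and> (\<forall>z\<in>U. f (h z) = f (h y))" by blast
qed

lemma lc_binop:
  assumes "lc X f" "lc X g"
  shows "lc X (\<lambda>x. H (f x) (g x))"
  unfolding lc_def
proof
  fix y assume y: "y \<in> topspace X"
  obtain U where U: "openin X U" "y \<in> U" "\<forall>z\<in>U. f z = f y" using assms(1) y unfolding lc_def by blast
  obtain V where V: "openin X V" "y \<in> V" "\<forall>z\<in>V. g z = g y" using assms(2) y unfolding lc_def by blast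
  have "openin X (U \<inter> V)" using U(1) V(1) by blast
  moreover have "\<forall>z\<in>U \<inter> V. H (f z) (g z) = H (f y) (g y)" using U(3) V(3) by simp
  ultimately show "\<exists>U. openin X U \<and> y \<in> U \<and> (\<forall>z\<in>U. H (f z) (g z) = H (f y) (g y))"
    using U(2) V(2) by blast
qed

lemma lc_const: "lc X (\<lambda>x. c)"
  unfolding lc_def by auto

lemma lc_sum:
  assumes "finite A" "\<And>a. a \<in> A \<Longrightarrow> lc X (f a)"
  shows "lc X (\<lambda>x. \<Sum>a\<in>A. f a x)"
  using assms
proof (induction A rule: finite_induct)
  case empty then show ?case by (simp add: lc_const)
next
  case (insert a A)
  have "lc X (\<lambda>x. f a x + (\<Sum>a\<in>A. f a x))"
    using lc_binop[OF insert.prems[of a] insert.IH, of "(+)"] insert.prems by auto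
  then show ?case using insert.hyps by simp
qed

lemma lc_coset:
  assumes "cog K" "continuous_map X euclidean h"
  shows "lc X (\<lambda>x. h x \<in> (+) a ` (K::'g::topological_group_add set))"
  unfolding lc_def
proof
  fix y assume y: "y \<in> topspace X"
  have sg: "is_subgroup K" "open K" using assms(1) by (auto simp: cog_def)
  let ?U = "{x \<in> topspace X. h x \<in> (+) (h y) ` K}"
  have "openin X ?U"
    using openin_continuous_map_preimage[OF assms(2), of "(+) (h y) ` K"] open_coset[OF sg(2)] by simp
  moreover have "y \<in> ?U" using y coset_self[OF sg(1)] by simp
  moreover have "(h z \<in> (+) a ` K) = (h y \<in> (+) a ` K)" if z: "z \<in> ?U" for z
  proof -
    have "(+) (h z) ` K = (+) (h y) ` K" using z coset_eq[OF sg(1)] by blast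
    then show ?thesis using coset_iff[OF sg(1), of "h z" a] coset_iff[OF sg(1), of "h y" a] by simp
  qed
  ultimately show "\<exists>U. openin X U \<and> y \<in> U \<and> (\<forall>z\<in>U. (h z \<in> (+) a ` K) = (h y \<in> (+) a ` K))" by blast
qed

lemma lc_act:
  fixes act :: "'g::topological_group_add \<Rightarrow> 'v \<Rightarrow> 'v"
  assumes hact: "\<And>v. \<exists>K. cog K \<and> (\<forall>k\<in>K. act k v = v)"
    and hadd: "\<And>g h v. act (g + h) v = act g (act h v)"
    and "lc X w" "continuous_map X euclidean h"
  shows "lc X (\<lambda>x. act (h x) (w x))"
  unfolding lc_def
proof
  fix y assume y: "y \<in> topspace X"
  obtain U where U: "openin X U" "y \<in> U" "\<forall>z\<in>U. w z = w y" using assms(3) y unfolding lc_def by blast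
  obtain K where K: "cog K" "\<forall>k\<in>K. act k (w y) = w y" using hact by blast
  have sg: "is_subgroup K" "open K" using K(1) by (auto simp: cog_def)
  let ?V = "{x \<in> topspace X. h x \<in> (+) (h y) ` K}"
  have "openin X ?V"
    using openin_continuous_map_preimage[OF assms(4), of "(+) (h y) ` K"] open_coset[OF sg(2)] by simp
  moreover have "y \<in> ?V" using y coset_self[OF sg(1)] by simp
  moreover have "act (h z) (w z) = act (h y) (w y)" if z: "z \<in> U \<inter> ?V" for z
  proof -
    obtain k where k: "k \<in> K" "h z = h y + k" using z by auto
    have "w z = w y" using z U(3) by blast
    then have "act (h z) (w z) = act (h y + k) (w y)" using k(2) by simp
    also have "\<dots> = act (h y) (w y)" using hadd K k by simp
    finally show ?thesis .
  qed
  ultimately have "openin X (U \<inter> ?V) \<and> y \<in> U \<inter> ?V \<and> (\<forall>z\<in>U \<inter> ?V. act (h z) (w z) = act (h y) (w y))"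
    using U(1,2) by blast
  then show "\<exists>U. openin X U \<and> y \<in> U \<and> (\<forall>z\<in>U. act (h z) (w z) = act (h y) (w y))" by blast
qed

lemma lc_open_vimage:
  assumes "lc euclidean \<phi>"
  shows "open (\<phi> -` {v})"
proof -
  have "\<exists>T. open T \<and> y \<in> T \<and> T \<subseteq> \<phi> -` {v}" if y: "y \<in> \<phi> -` {v}" for y
  proof -
    have "\<exists>U. openin euclidean U \<and> y \<in> U \<and> (\<forall>z\<in>U. \<phi> z = \<phi> y)" using assms unfolding lc_def by simp
    then obtain U where U: "open U" "y \<in> U" "\<forall>z\<in>U. \<phi> z = \<phi> y" by auto
    have "U \<subseteq> \<phi> -` {v}" using U(3) y by auto
    then show ?thesis using U(1,2) by blast
  qed
  then show ?thesis by (subst open_subopen) simp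
qed



lemma haar_vanish: "(\<And>g. \<phi> g = 0) \<Longrightarrow> haar_int sc M \<phi> = 0"
proof -
  assume "\<And>g. \<phi> g = 0"
  then have "range \<phi> - {0} = {}" by auto
  then show ?thesis unfolding haar_int_def by (metis sum.empty)
qed

lemma lhm_parts:
  assumes "left_haar_measure M"
  shows "sets M = sets borel" "\<forall>g. \<forall>A\<in>sets M. emeasure M ((+) g ` A) = emeasure M A"
    "\<forall>K. compact K \<longrightarrow> emeasure M K < \<infinity>" "\<forall>U. open U \<and> U \<noteq> {} \<longrightarrow> emeasure M U > 0"
proof -
  note H = assms[unfolded left_haar_measure_def]
  show "sets M = sets borel" using H by (elim conjE) assumption
  show "\<forall>g. \<forall>A\<in>sets M. emeasure M ((+) g ` A) = emeasure M A" using H by (elim conjE) assumption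
  show "\<forall>K. compact K \<longrightarrow> emeasure M K < \<infinity>" using H by (elim conjE) assumption
  show "\<forall>U. open U \<and> U \<noteq> {} \<longrightarrow> emeasure M U > 0" using H by (elim conjE) assumption
qed

lemma lhm_sets: "left_haar_measure M \<Longrightarrow> open A \<Longrightarrow> A \<in> sets M"
  using lhm_parts(1) by (metis borel_open)

lemma lhm_inv: "left_haar_measure M \<Longrightarrow> A \<in> sets M \<Longrightarrow> emeasure M ((+) g ` A) = emeasure M A"
  using lhm_parts(2) by blast

lemma lhm_inv_measure: "left_haar_measure M \<Longrightarrow> A \<in> sets M \<Longrightarrow> measure M ((+) g ` A) = measure M A"
  unfolding measure_def using lhm_inv by metis

lemma lhm_compact: "left_haar_measure M \<Longrightarrow> compact K \<Longrightarrow> emeasure M K \<noteq> top"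
proof -
  assume "left_haar_measure M" "compact K"
  then have "emeasure M K < \<infinity>" using lhm_parts(3) by blast
  then show ?thesis by simp
qed

lemma lhm_pos: "left_haar_measure M \<Longrightarrow> open U \<Longrightarrow> U \<noteq> {} \<Longrightarrow> emeasure M U > 0"
  using lhm_parts(4) by blast

lemma haar_shift:
  fixes \<phi> :: "'g::topological_group_add \<Rightarrow> 'v::ab_group_add"
  assumes "left_haar_measure M" "lc euclidean \<phi>"
  shows "haar_int sc M (\<lambda>g. \<phi> (- h + g)) = haar_int sc M \<phi>"
proof -
  have r: "range (\<lambda>g. \<phi> (- h + g)) = range \<phi>"
  proof
    show "range (\<lambda>g. \<phi> (- h + g)) \<subseteq> range \<phi>" by auto
    show "range \<phi> \<subseteq> range (\<lambda>g. \<phi> (- h + g))"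
    proof
      fix v assume "v \<in> range \<phi>"
      then obtain x where "v = \<phi> x" by auto
      then have "v = \<phi> (- h + (h + x))" by simp
      then show "v \<in> range (\<lambda>g. \<phi> (- h + g))" by blast
    qed
  qed
  have p: "(\<lambda>g. \<phi> (- h + g)) -` {v} = (+) h ` (\<phi> -` {v})" for v
    by (auto simp: mem_coset)
  have m: "measure M ((+) h ` (\<phi> -` {v})) = measure M (\<phi> -` {v})" for v
  proof -
    have "\<phi> -` {v} \<in> sets M" using lhm_sets[OF assms(1) lc_open_vimage[OF assms(2)]] .
    then show ?thesis using lhm_inv_measure[OF assms(1)] by blast
  qed
  show ?thesis unfolding haar_int_def r p m ..
qed

lemma sum_if_single:
  assumes "finite A" "a \<in> A" "\<And>b. b \<in> A \<Longrightarrow> b \<noteq> a \<Longrightarrow> \<not> P b" "P a"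
  shows "(\<Sum>b\<in>A. if P b then f b else 0) = f a"
proof -
  have "(\<Sum>b\<in>A. if P b then f b else 0) = (if P a then f a else 0) + (\<Sum>b\<in>A - {a}. if P b then f b else 0)"
    using sum.remove[OF assms(1,2)] by blast
  also have "(\<Sum>b\<in>A - {a}. if P b then f b else 0) = 0"
    using assms(3) by (intro sum.neutral) auto
  finally show ?thesis using assms(4) by simp
qed

definition disj_cos :: "'g::group_add set \<Rightarrow> 'g set \<Rightarrow> bool" where
  "disj_cos K A \<longleftrightarrow> (\<forall>a\<in>A. \<forall>b\<in>A. a \<noteq> b \<longrightarrow> (+) a ` K \<inter> (+) b ` K = {})"

lemma cog_meas:
  assumes "left_haar_measure M" "cog K"
  shows "(+) a ` K \<in> sets M" "measure M ((+) a ` K) = measure M K" "emeasure M ((+) a ` K) \<noteq> top"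
    "measure M K > 0"
proof -
  have K: "compact K" "open K" "0 \<in> K" using assms(2) by (auto simp: cog_def is_subgroup_def)
  have KM: "K \<in> sets M" using lhm_sets[OF assms(1) K(2)] .
  show "(+) a ` K \<in> sets M" using lhm_sets[OF assms(1) open_coset[OF K(2)]] .
  show "measure M ((+) a ` K) = measure M K" using lhm_inv_measure[OF assms(1) KM] .
  show "emeasure M ((+) a ` K) \<noteq> top" using lhm_compact[OF assms(1) compact_coset[OF K(1)]] .
  have fin: "emeasure M K \<noteq> top" using lhm_compact[OF assms(1) K(1)] .
  have pos: "emeasure M K > 0" using lhm_pos[OF assms(1) K(2)] K(3) by blast
  show "measure M K > 0" using fin pos emeasure_eq_ennreal_measure[OF fin]
    by (metis ennreal_less_zero_iff measure_nonneg order_less_le)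
qed

lemma haar_cosets:
  fixes \<phi> :: "'g::{topological_group_add,t2_space} \<Rightarrow> 'v::ab_group_add"
  assumes vs: "vector_space sc" and hm: "left_haar_measure M" and K: "cog K" and A: "finite A" "disj_cos K A"
    and phi: "\<And>g. \<phi> g = (\<Sum>a\<in>A. if g \<in> (+) a ` K then w a else 0)"
  shows "haar_int sc M \<phi> = (\<Sum>a\<in>A. sc (complex_of_real (measure M K)) (w a))"
proof -
  interpret vs: vector_space sc by fact
  have sg: "is_subgroup K" using K by (simp add: cog_def)
  let ?c = "complex_of_real (measure M K)"
  have val: "\<phi> g = w a" if "a \<in> A" "g \<in> (+) a ` K" for g a
  proof -
    have "\<And>b. b \<in> A \<Longrightarrow> b \<noteq> a \<Longrightarrow> g \<notin> (+) b ` K" using A(2) that unfolding disj_cos_def by blast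
    then show ?thesis unfolding phi using sum_if_single[OF A(1) that(1), of "\<lambda>b. g \<in> (+) b ` K" w] that(2) by blast
  qed
  have val0: "\<phi> g = 0" if "\<forall>a\<in>A. g \<notin> (+) a ` K" for g
    unfolding phi using that by (intro sum.neutral) auto
  define W where "W = w ` A - {0}"
  have fW: "finite W" using A(1) by (simp add: W_def)
  have rW: "range \<phi> - {0} \<subseteq> W"
  proof
    fix v assume v: "v \<in> range \<phi> - {0}"
    then obtain g where g: "v = \<phi> g" by auto
    show "v \<in> W"
    proof (cases "\<exists>a\<in>A. g \<in> (+) a ` K")
      case True then obtain a where "a \<in> A" "g \<in> (+) a ` K" by blast
      then show ?thesis using val g v by (auto simp: W_def)
    next
      case False then show ?thesis using val0 g v by auto
    qed
  qed
  have pre: "\<phi> -` {v} = (\<Union>a\<in>{a\<in>A. w a = v}. (+) a ` K)" if "v \<in> W" for v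
  proof
    show "\<phi> -` {v} \<subseteq> (\<Union>a\<in>{a\<in>A. w a = v}. (+) a ` K)"
    proof
      fix g assume g: "g \<in> \<phi> -` {v}"
      have "v \<noteq> 0" using that by (simp add: W_def)
      then have "\<exists>a\<in>A. g \<in> (+) a ` K" using g val0 by force
      then obtain a where "a \<in> A" "g \<in> (+) a ` K" by blast
      then show "g \<in> (\<Union>a\<in>{a\<in>A. w a = v}. (+) a ` K)" using val g by force
    qed
    show "(\<Union>a\<in>{a\<in>A. w a = v}. (+) a ` K) \<subseteq> \<phi> -` {v}" using val by force
  qed
  have mpre: "measure M (\<phi> -` {v}) = (\<Sum>a\<in>{a\<in>A. w a = v}. measure M K)" if "v \<in> W" for v
  proof -
    have "measure M (\<Union>a\<in>{a\<in>A. w a = v}. (+) a ` K) = (\<Sum>a\<in>{a\<in>A. w a = v}. measure M ((+) a ` K))"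
    proof (rule measure_finite_Union)
      show "finite {a \<in> A. w a = v}" using A(1) by simp
      show "(\<lambda>a. (+) a ` K) ` {a \<in> A. w a = v} \<subseteq> sets M" using cog_meas[OF hm K] by blast
      show "disjoint_family_on (\<lambda>a. (+) a ` K) {a \<in> A. w a = v}"
        using A(2) unfolding disj_cos_def disjoint_family_on_def by blast
      show "\<And>i. i \<in> {a \<in> A. w a = v} \<Longrightarrow> emeasure M ((+) i ` K) \<noteq> \<infinity>" using cog_meas(3)[OF hm K] by simp
    qed
    then show ?thesis using pre[OF that] cog_meas(2)[OF hm K] by simp
  qed
  have "haar_int sc M \<phi> = (\<Sum>v\<in>range \<phi> - {0}. sc (complex_of_real (measure M (\<phi> -` {v}))) v)"
    by (simp add: haar_int_def)
  also have "\<dots> = (\<Sum>v\<in>W. sc (complex_of_real (measure M (\<phi> -` {v}))) v)"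
  proof (rule sum.mono_neutral_left[OF fW rW], rule ballI)
    fix v assume v: "v \<in> W - (range \<phi> - {0})"
    then have "v \<notin> range \<phi>" by (auto simp: W_def)
    then have "\<phi> -` {v} = {}" by auto
    then show "sc (complex_of_real (measure M (\<phi> -` {v}))) v = 0" by simp
  qed
  also have "\<dots> = (\<Sum>v\<in>W. \<Sum>a\<in>{a\<in>A. w a = v}. sc ?c (w a))"
  proof (rule sum.cong[OF refl])
    fix v assume v: "v \<in> W"
    have "sc (complex_of_real (measure M (\<phi> -` {v}))) v = sc (\<Sum>a\<in>{a\<in>A. w a = v}. ?c) v"
      using mpre[OF v] by simp
    also have "\<dots> = (\<Sum>a\<in>{a\<in>A. w a = v}. sc ?c v)" by (rule vs.scale_sum_left)
    also have "\<dots> = (\<Sum>a\<in>{a\<in>A. w a = v}. sc ?c (w a))" by (rule sum.cong) auto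
    finally show "sc (complex_of_real (measure M (\<phi> -` {v}))) v = (\<Sum>a\<in>{a\<in>A. w a = v}. sc ?c (w a))" .
  qed
  also have "\<dots> = (\<Sum>v\<in>W. \<Sum>a\<in>{a\<in>{a\<in>A. w a \<noteq> 0}. w a = v}. sc ?c (w a))"
    by (rule sum.cong[OF refl]) (auto simp: W_def intro!: sum.cong)
  also have "\<dots> = (\<Sum>a\<in>{a\<in>A. w a \<noteq> 0}. sc ?c (w a))"
    by (rule sum.group) (use A(1) in \<open>auto simp: W_def\<close>)
  also have "\<dots> = (\<Sum>a\<in>A. sc ?c (w a))"
    by (rule sum.mono_neutral_left) (use A(1) in auto)
  finally show ?thesis .
qed

lemma haar_inv:
  fixes \<phi> :: "'g::{topological_group_add,t2_space} \<Rightarrow> 'v::ab_group_add"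
  assumes vs: "vector_space sc" and hm: "left_haar_measure M" and K: "cog K" and A: "finite A" "disj_cos K A"
    and inv: "\<And>g k. k \<in> K \<Longrightarrow> \<phi> (g + k) = \<phi> g"
    and supp: "\<And>g. \<phi> g \<noteq> 0 \<Longrightarrow> \<exists>a\<in>A. g \<in> (+) a ` K"
  shows "haar_int sc M \<phi> = sc (complex_of_real (measure M K)) (\<Sum>a\<in>A. \<phi> a)"
proof -
  interpret vs: vector_space sc by fact
  have phi: "\<phi> g = (\<Sum>a\<in>A. if g \<in> (+) a ` K then \<phi> a else 0)" for g
  proof (cases "\<exists>a\<in>A. g \<in> (+) a ` K")
    case True
    then obtain a where a: "a \<in> A" "g \<in> (+) a ` K" by blast
    then obtain k where k: "k \<in> K" "g = a + k" by auto
    have "\<And>b. b \<in> A \<Longrightarrow> b \<noteq> a \<Longrightarrow> g \<notin> (+) b ` K" using A(2) a unfolding disj_cos_def by blast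
    then have "(\<Sum>a\<in>A. if g \<in> (+) a ` K then \<phi> a else 0) = \<phi> a"
      using sum_if_single[OF A(1) a(1), of "\<lambda>b. g \<in> (+) b ` K" \<phi>] a(2) by blast
    then show ?thesis using inv k by simp
  next
    case False
    then have "\<phi> g = 0" using supp by blast
    moreover have "(\<Sum>a\<in>A. if g \<in> (+) a ` K then \<phi> a else 0) = 0" using False by (intro sum.neutral) auto
    ultimately show ?thesis by simp
  qed
  show ?thesis using haar_cosets[OF vs hm K A phi] vs.scale_sum_right[symmetric] by simp
qed

lemma dedupe_cosets:
  assumes "finite A0" "is_subgroup (K::'g::group_add set)"
  shows "\<exists>A. finite A \<and> (\<Union>a\<in>A. (+) a ` K) = (\<Union>a\<in>A0. (+) a ` K) \<and> disj_cos K A"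
  using assms(1)
proof (induction A0 rule: finite_induct)
  case empty then show ?case by (auto simp: disj_cos_def)
next
  case (insert x A0)
  then obtain A where A: "finite A" "(\<Union>a\<in>A. (+) a ` K) = (\<Union>a\<in>A0. (+) a ` K)" "disj_cos K A" by blast
  show ?case
  proof (cases "\<exists>b\<in>A. (+) x ` K \<inter> (+) b ` K \<noteq> {}")
    case True
    then obtain b where b: "b \<in> A" "(+) x ` K = (+) b ` K" using coset_meet[OF assms(2)] by blast
    then have "(+) x ` K \<subseteq> (\<Union>a\<in>A. (+) a ` K)" by blast
    then have "(\<Union>a\<in>A. (+) a ` K) = (\<Union>a\<in>insert x A0. (+) a ` K)" using A(2) by (simp add: Un_absorb1)
    then show ?thesis using A by blast
  next
    case False
    have "(\<Union>a\<in>insert x A. (+) a ` K) = (\<Union>a\<in>insert x A0. (+) a ` K)" using A(2) by auto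
    moreover have "disj_cos K (insert x A)" using A(3) False unfolding disj_cos_def by blast
    ultimately show ?thesis using A(1) by blast
  qed
qed

lemma cover_cosets:
  assumes "compact S" "cog (K::'g::topological_group_add set)"
  shows "\<exists>A. finite A \<and> S \<subseteq> (\<Union>a\<in>A. (+) a ` K) \<and> disj_cos K A"
proof -
  have sg: "is_subgroup K" "open K" using assms(2) by (auto simp: cog_def)
  have "S \<subseteq> \<Union>((\<lambda>a. (+) a ` K) ` S)" using coset_self[OF sg(1)] by blast
  moreover have "\<And>B. B \<in> (\<lambda>a. (+) a ` K) ` S \<Longrightarrow> open B" using open_coset[OF sg(2)] by blast
  ultimately obtain T where T: "T \<subseteq> (\<lambda>a. (+) a ` K) ` S" "finite T" "S \<subseteq> \<Union>T"
    using compactE[OF assms(1)] by metis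
  then obtain A0 where A0: "A0 \<subseteq> S" "finite A0" "T = (\<lambda>a. (+) a ` K) ` A0"
    using finite_subset_image[OF T(2) T(1)] by blast
  obtain A where A: "finite A" "(\<Union>a\<in>A. (+) a ` K) = (\<Union>a\<in>A0. (+) a ` K)" "disj_cos K A"
    using dedupe_cosets[OF A0(2) sg(1)] by blast
  have "S \<subseteq> (\<Union>a\<in>A. (+) a ` K)" using T(3) A0(3) A(2) by simp
  then show ?thesis using A(1,3) by blast
qed



definition sig :: "nat \<Rightarrow> 'g::monoid_add \<Rightarrow> (nat \<Rightarrow> 'g) \<Rightarrow> (nat \<Rightarrow> 'g)" where
  "sig n g x = restrict (\<lambda>i. g + pprod x i) {..<Suc n}"

definition del :: "nat \<Rightarrow> (nat \<Rightarrow> 'g::group_add) \<Rightarrow> (nat \<Rightarrow> 'g)" where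
  "del n y = restrict (\<lambda>i. - y i + y (Suc i)) {..<n}"

lemma proj_cont: "i < n \<Longrightarrow> continuous_map (Gpow n) euclidean (\<lambda>x. x i)"
  using continuous_map_product_projection[of i "{..<n}" "\<lambda>_. euclidean"] by simp

lemma pprod_cont:
  "i \<le> n \<Longrightarrow> continuous_map (Gpow n) euclidean (\<lambda>x. pprod x i :: 'g::topological_monoid_add)"
proof (induction i)
  case 0 then show ?case by simp
next
  case (Suc i)
  then have "continuous_map (Gpow n) euclidean (\<lambda>x. pprod x i + x i :: 'g)"
    by (intro cm_add proj_cont) auto
  then show ?case by simp
qed

lemma sig_cont:
  "continuous_map (prod_topology euclidean (Gpow n)) (Gpow (Suc n)) (\<lambda>p. sig n (fst p) (snd p) :: nat \<Rightarrow> 'g::topological_monoid_add)"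
  unfolding continuous_map_componentwise
proof
  show "(\<lambda>p. sig n (fst p) (snd p) :: nat \<Rightarrow> 'g) ` topspace (prod_topology euclidean (Gpow n)) \<subseteq> extensional {..<Suc n}"
    by (auto simp: sig_def)
  show "\<forall>k\<in>{..<Suc n}. continuous_map (prod_topology euclidean (Gpow n)) euclidean (\<lambda>p. sig n (fst p) (snd p) k :: 'g)"
  proof
    fix k assume k: "k \<in> {..<Suc n}"
    have "continuous_map (prod_topology euclidean (Gpow n)) euclidean (\<lambda>p. fst p + pprod (snd p) k :: 'g)"
      using k by (intro cm_add continuous_map_fst continuous_map_compose[OF continuous_map_snd pprod_cont, unfolded o_def]) auto
    moreover have "(\<lambda>p. sig n (fst p) (snd p) k :: 'g) = (\<lambda>p. fst p + pprod (snd p) k)" using k by (simp add: sig_def)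
    ultimately show "continuous_map (prod_topology euclidean (Gpow n)) euclidean (\<lambda>p. sig n (fst p) (snd p) k :: 'g)" by simp
  qed
qed

lemma sig_cont_x:
  "continuous_map (Gpow n) (Gpow (Suc n)) (\<lambda>x. sig n g x :: nat \<Rightarrow> 'g::topological_monoid_add)"
proof -
  have "continuous_map (Gpow n) (prod_topology euclidean (Gpow n)) (\<lambda>x. (g, x) :: 'g \<times> (nat \<Rightarrow> 'g))"
    by (intro continuous_map_pairedI) auto
  from continuous_map_compose[OF this sig_cont] show ?thesis by (simp add: o_def)
qed

lemma sig_cont_g:
  "x \<in> topspace (Gpow n) \<Longrightarrow> continuous_map euclidean (Gpow (Suc n)) (\<lambda>g. sig n g x :: nat \<Rightarrow> 'g::topological_monoid_add)"
proof -
  assume x: "x \<in> topspace (Gpow n)"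
  have "continuous_map euclidean (prod_topology euclidean (Gpow n)) (\<lambda>g. (g, x) :: 'g \<times> (nat \<Rightarrow> 'g))"
    using x by (intro continuous_map_pairedI) (auto simp: continuous_map_def)
  from continuous_map_compose[OF this sig_cont] show ?thesis by (simp add: o_def)
qed

lemma del_cont:
  "continuous_map (Gpow (Suc n)) (Gpow n) (del n :: (nat \<Rightarrow> 'g::topological_group_add) \<Rightarrow> _)"
  unfolding continuous_map_componentwise
proof
  show "del n ` topspace (Gpow (Suc n)) \<subseteq> extensional {..<n}" by (auto simp: del_def)
  show "\<forall>k\<in>{..<n}. continuous_map (Gpow (Suc n)) euclidean (\<lambda>y. del n y k :: 'g)"
  proof
    fix k assume k: "k \<in> {..<n}"
    have "continuous_map (Gpow (Suc n)) euclidean (\<lambda>y. - y k + y (Suc k) :: 'g)"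
      using k by (intro cm_add cm_minus proj_cont) auto
    moreover have "(\<lambda>y. del n y k :: 'g) = (\<lambda>y. - y k + y (Suc k))" using k by (simp add: del_def)
    ultimately show "continuous_map (Gpow (Suc n)) euclidean (\<lambda>y. del n y k :: 'g)" by simp
  qed
qed

lemma proj0_cont: "continuous_map (Gpow (Suc n)) euclidean (\<lambda>y. y 0)"
  by (rule proj_cont) simp

lemma pprod_del:
  fixes y :: "nat \<Rightarrow> 'g::group_add"
  shows "i \<le> n \<Longrightarrow> pprod (del n y) i = - y 0 + y i"
proof (induction i)
  case 0 then show ?case by simp
next
  case (Suc i)
  then have IH: "pprod (del n y) i = - y 0 + y i" by simp
  have d: "del n y i = - y i + y (Suc i)" using Suc.prems by (simp add: del_def)
  have "pprod (del n y) (Suc i) = (- y 0 + y i) + (- y i + y (Suc i))" by (simp only: pprod.simps IH d)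
  also have "\<dots> = - y 0 + y (Suc i)" by (simp add: add.assoc)
  finally show ?case .
qed

lemma sig_del:
  fixes y :: "nat \<Rightarrow> 'g::topological_group_add"
  assumes "y \<in> topspace (Gpow (Suc n))"
  shows "sig n (y 0) (del n y) = y"
proof
  fix i show "sig n (y 0) (del n y) i = y i"
  proof (cases "i < Suc n")
    case True then show ?thesis using pprod_del[of i n y] by (simp add: sig_def)
  next
    case False then show ?thesis using assms by (auto simp: sig_def PiE_def extensional_def)
  qed
qed

lemma del_sig:
  fixes x :: "nat \<Rightarrow> 'g::topological_group_add"
  assumes "x \<in> topspace (Gpow n)"
  shows "del n (sig n g x) = x"
proof
  fix i show "del n (sig n g x) i = x i"
  proof (cases "i < n")
    case True
    have e: "g + (pprod x i + x i) = (g + pprod x i) + x i" by (simp add: add.assoc)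
    have "del n (sig n g x) i = - (g + pprod x i) + (g + (pprod x i + x i))" using True by (simp add: sig_def del_def)
    also have "\<dots> = x i" unfolding e by (rule minus_add_cancel)
    finally show ?thesis .
  next
    case False then show ?thesis using assms by (auto simp: del_def PiE_def extensional_def)
  qed
qed

lemma sig_top: "sig n g x \<in> topspace (Gpow (Suc n))"
  by (simp add: sig_def)

lemma del_top: "del n y \<in> topspace (Gpow n)"
  by (simp add: del_def)

lemma sig_0 [simp]: "sig n g x 0 = g"
  by (simp add: sig_def)

lemma sig_shift: "restrict (\<lambda>i. a + sig n g x i) {..<Suc n} = sig n (a + (g::'g::monoid_add)) x"
  by (auto simp: sig_def add.assoc)

definition Psi :: "('g::group_add \<Rightarrow> 'v \<Rightarrow> 'v) \<Rightarrow> nat \<Rightarrow> ((nat \<Rightarrow> 'g) \<Rightarrow> 'v) \<Rightarrow> 'g \<Rightarrow> (nat \<Rightarrow> 'g) \<Rightarrow> 'v" where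
  "Psi act n f g x = act (- g) (f (sig n g x))"

lemma T_op_Psi: "x \<in> topspace (Gpow n) \<Longrightarrow> T_op sc M act n f x = haar_int sc M (\<lambda>g. Psi act n f g x)"
  by (simp add: T_op_def Psi_def sig_def)

lemma T_op_out: "x \<notin> topspace (Gpow n) \<Longrightarrow> T_op sc M act n f x = 0"
  by (simp add: T_op_def)

lemma sm_parts:
  assumes "smooth_module sc (act :: 'g::topological_group_add \<Rightarrow> 'v::ab_group_add \<Rightarrow> 'v)"
  shows "vector_space sc" "\<And>g. Vector_Spaces.linear sc sc (act g)" "\<And>v. act 0 v = v"
    "\<And>g h v. act (g + h) v = act g (act h v)" "\<And>v. \<exists>K. cog K \<and> (\<forall>k\<in>K. act k v = v)"
  using assms unfolding smooth_module_def cog_def by blast+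

lemma act_add: "smooth_module sc act \<Longrightarrow> act g (a + b) = act g a + act g b"
  using sm_parts(2) by (metis module_hom.add linear_iff_module_hom)

lemma act_scale: "smooth_module sc act \<Longrightarrow> act g (sc c a) = sc c (act g a)"
  using sm_parts(2) by (metis module_hom.scale linear_iff_module_hom)

lemma act_zero: "smooth_module sc act \<Longrightarrow> act g 0 = 0"
  using act_add[of sc act g 0 0] by simp

lemma act_inv: "smooth_module sc act \<Longrightarrow> act (- g) (act g v) = v"
  using sm_parts(3,4) by (metis add.left_inverse)

lemma act_inv2: "smooth_module sc act \<Longrightarrow> act g (act (- g) v) = v"
  using sm_parts(3,4) by (metis add.right_inverse)

lemma act_sum: "smooth_module sc act \<Longrightarrow> act g (\<Sum>a\<in>A. w a) = (\<Sum>a\<in>A. act g (w a))"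
proof (induction A rule: infinite_finite_induct)
  case (infinite A) then show ?case by (simp add: act_zero)
next
  case empty then show ?case by (simp add: act_zero)
next
  case (insert x F) then show ?case by (simp add: act_add)
qed



lemma unif_lc:
  fixes \<Phi> :: "'g::{topological_group_add,t2_space} \<times> 'a \<Rightarrow> 'b::zero"
  assumes lg: "l_group TYPE('g)" and lcP: "lc (prod_topology euclidean Y) \<Phi>"
    and C: "compactin (prod_topology euclidean Y) C"
    and z: "\<And>g x. x \<in> topspace Y \<Longrightarrow> (g, x) \<notin> C \<Longrightarrow> \<Phi> (g, x) = 0"
  shows "\<exists>K. cog K \<and> (\<forall>g x k. x \<in> topspace Y \<longrightarrow> k \<in> K \<longrightarrow> \<Phi> (g + k, x) = \<Phi> (g, x))"
proof -
  have loc: "\<exists>Kp Vp. cog Kp \<and> openin Y Vp \<and> snd p \<in> Vp \<and> (\<forall>k\<in>Kp. \<forall>x\<in>Vp. \<Phi> (fst p + k, x) = \<Phi> p)"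
    if p: "p \<in> C" for p
  proof -
    have ptop: "p \<in> topspace (prod_topology euclidean Y)" using C p compactin_subset_topspace by blast
    obtain W where W: "openin (prod_topology euclidean Y) W" "p \<in> W" "\<forall>z\<in>W. \<Phi> z = \<Phi> p"
      using lcP ptop unfolding lc_def by blast
    obtain U V where UV: "openin euclidean U" "openin Y V" "fst p \<in> U" "snd p \<in> V" "U \<times> V \<subseteq> W"
      using W(1,2) unfolding openin_prod_topology_alt by (metis prod.collapse)
    have "continuous_on UNIV (\<lambda>z. fst p + z)" by (intro continuous_intros)
    then have "open ((\<lambda>z. fst p + z) -` U)" using continuous_on_open_vimage[OF open_UNIV] UV(1) by auto
    moreover have "0 \<in> (\<lambda>z. fst p + z) -` U" using UV(3) by simp
    ultimately obtain Kp where Kp: "cog Kp" "Kp \<subseteq> (\<lambda>z. fst p + z) -` U" using exists_cog[OF lg] by blast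
    have "\<forall>k\<in>Kp. \<forall>x\<in>V. \<Phi> (fst p + k, x) = \<Phi> p"
    proof (intro ballI)
      fix k x assume "k \<in> Kp" "x \<in> V"
      then have "(fst p + k, x) \<in> W" using Kp(2) UV(5) by blast
      then show "\<Phi> (fst p + k, x) = \<Phi> p" using W(3) by blast
    qed
    then show ?thesis using Kp(1) UV(2,4) by blast
  qed
  obtain Kf Vf where KV: "\<And>p. p \<in> C \<Longrightarrow> cog (Kf p) \<and> openin Y (Vf p) \<and> snd p \<in> Vf p \<and> (\<forall>k\<in>Kf p. \<forall>x\<in>Vf p. \<Phi> (fst p + k, x) = \<Phi> p)"
    using loc by metis
  define Ob where "Ob p = (+) (fst p) ` Kf p \<times> Vf p" for p
  have Oopen: "openin (prod_topology euclidean Y) (Ob p)" if "p \<in> C" for p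
  proof -
    have "open (Kf p)" using KV[OF that] by (simp add: cog_def)
    then have "openin euclidean ((+) (fst p) ` Kf p)" using open_coset by auto
    then show ?thesis unfolding Ob_def openin_prod_Times_iff using KV[OF that] by blast
  qed
  have Ocov: "C \<subseteq> \<Union>(Ob ` C)"
  proof
    fix p assume p: "p \<in> C"
    have "fst p \<in> (+) (fst p) ` Kf p" using KV[OF p] coset_self by (auto simp: cog_def)
    then have "p \<in> Ob p" using KV[OF p] unfolding Ob_def by (metis mem_Times_iff)
    then show "p \<in> \<Union>(Ob ` C)" using p by blast
  qed
  have oo: "\<forall>U\<in>Ob ` C. openin (prod_topology euclidean Y) U" using Oopen by blast
  have "\<forall>\<U>. (\<forall>U\<in>\<U>. openin (prod_topology euclidean Y) U) \<and> C \<subseteq> \<Union>\<U> \<longrightarrow> (\<exists>\<F>. finite \<F> \<and> \<F> \<subseteq> \<U> \<and> C \<subseteq> \<Union>\<F>)"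
    using C unfolding compactin_def by blast
  then have "\<exists>\<F>. finite \<F> \<and> \<F> \<subseteq> Ob ` C \<and> C \<subseteq> \<Union>\<F>" using oo Ocov by blast
  then obtain F where F: "finite F" "F \<subseteq> Ob ` C" "C \<subseteq> \<Union>F" by blast
  obtain P where P: "P \<subseteq> C" "finite P" "F = Ob ` P"
    using finite_subset_image[OF F(1,2)] by blast
  obtain K0 :: "'g set" where K0: "cog K0" using exists_cog[OF lg, of UNIV] by blast
  define K where "K = K0 \<inter> (\<Inter>p\<in>P. Kf p)"
  have cogK: "cog K" unfolding K_def using cog_INT[OF K0 P(2)] KV P(1) by blast
  have key: "\<Phi> (g + k, x) = \<Phi> (g, x)" if gx: "(g, x) \<in> C" and k: "k \<in> K" for g x k
  proof -
    obtain p where p: "p \<in> P" "(g, x) \<in> Ob p" using gx F(3) P(3) by blast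
    have pC: "p \<in> C" using p(1) P(1) by blast
    obtain k' where k': "k' \<in> Kf p" "g = fst p + k'" and x: "x \<in> Vf p" using p(2) unfolding Ob_def by auto
    have kK: "k \<in> Kf p" using k p(1) unfolding K_def by blast
    have "k' + k \<in> Kf p" using KV[OF pC] k' kK by (simp add: cog_def is_subgroup_def)
    have "\<Phi> (g + k, x) = \<Phi> (fst p + (k' + k), x)" by (simp add: k' add.assoc)
    also have "\<dots> = \<Phi> p" using KV[OF pC] \<open>k' + k \<in> Kf p\<close> x by blast
    also have "\<dots> = \<Phi> (fst p + k', x)" using KV[OF pC] k'(1) x by metis
    also have "\<dots> = \<Phi> (g, x)" using k'(2) by simp
    finally show ?thesis .
  qed
  have "\<forall>g x k. x \<in> topspace Y \<longrightarrow> k \<in> K \<longrightarrow> \<Phi> (g + k, x) = \<Phi> (g, x)"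
  proof (intro allI impI)
    fix g x k assume x: "x \<in> topspace Y" and k: "k \<in> K"
    show "\<Phi> (g + k, x) = \<Phi> (g, x)"
    proof (cases "(g, x) \<in> C")
      case True then show ?thesis using key k by blast
    next
      case False
      show ?thesis
      proof (cases "(g + k, x) \<in> C")
        case True
        have "- k \<in> K" using cogK k by (simp add: cog_def is_subgroup_def)
        then have "\<Phi> (g + k + - k, x) = \<Phi> (g + k, x)" using key[OF True] by blast
        then show ?thesis by (simp add: add.assoc)
      next
        case False2: False
        show ?thesis using z[OF x False] z[OF x False2] by simp
      qed
    qed
  qed
  then show ?thesis using cogK by blast
qed

lemma f_good:
  fixes f :: "(nat \<Rightarrow> 'g::{topological_group_add,t2_space}) \<Rightarrow> 'v::ab_group_add"
  assumes lg: "l_group TYPE('g)" and sm: "smooth_module sc act" and f: "f \<in> Cc_infty (Gpow (Suc n))"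
  shows "\<exists>K S. cog K \<and> compact S
    \<and> (\<forall>g x k. x \<in> topspace (Gpow n) \<longrightarrow> k \<in> K \<longrightarrow> Psi act n f (g + k) x = Psi act n f g x)
    \<and> (\<forall>g x. x \<in> topspace (Gpow n) \<longrightarrow> Psi act n f g x \<noteq> 0 \<longrightarrow> g \<in> S)
    \<and> (\<forall>y. f y \<noteq> 0 \<longrightarrow> y 0 \<in> S)"
proof -
  obtain Cf where Cf: "compactin (Gpow (Suc n)) Cf" "\<forall>y\<in>topspace (Gpow (Suc n)) - Cf. f y = 0"
    and lcf: "lc (Gpow (Suc n)) f" and out: "\<forall>y. y \<notin> topspace (Gpow (Suc n)) \<longrightarrow> f y = 0"
    using f unfolding Cc_infty_iff by blast
  define \<Phi> where "\<Phi> p = Psi act n f (fst p) (snd p)" for p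
  have lcPhi: "lc (prod_topology euclidean (Gpow n)) \<Phi>"
  proof -
    have "lc (prod_topology euclidean (Gpow n)) (\<lambda>p. f (sig n (fst p) (snd p)))"
      by (rule lc_comp[OF lcf sig_cont])
    moreover have "continuous_map (prod_topology euclidean (Gpow n)) euclidean (\<lambda>p. - fst p :: 'g)"
      by (intro cm_minus continuous_map_fst)
    ultimately show ?thesis
      unfolding \<Phi>_def Psi_def by (rule lc_act[OF sm_parts(5)[OF sm] sm_parts(4)[OF sm]])
  qed
  define C where "C = (\<lambda>y. (y 0, del n y)) ` Cf"
  have cC: "compactin (prod_topology euclidean (Gpow n)) C"
    unfolding C_def by (rule image_compactin[OF Cf(1)]) (intro continuous_map_pairedI proj0_cont del_cont)
  have zero: "\<Phi> (g, x) = 0" if x: "x \<in> topspace (Gpow n)" and nC: "(g, x) \<notin> C" for g x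
  proof (rule ccontr)
    assume "\<Phi> (g, x) \<noteq> 0"
    then have "f (sig n g x) \<noteq> 0" by (auto simp: \<Phi>_def Psi_def act_zero[OF sm])
    then have "sig n g x \<in> Cf" using Cf(2) sig_top by blast
    then have "(sig n g x 0, del n (sig n g x)) \<in> C" unfolding C_def by blast
    then show False using nC del_sig[OF x] by simp
  qed
  obtain K where K: "cog K" "\<forall>g x k. x \<in> topspace (Gpow n) \<longrightarrow> k \<in> K \<longrightarrow> \<Phi> (g + k, x) = \<Phi> (g, x)"
    using unif_lc[OF lg lcPhi cC zero] by blast
  define S where "S = fst ` C"
  have "compactin euclidean S" unfolding S_def by (rule image_compactin[OF cC continuous_map_fst])
  then have cS: "compact S" by simp
  have s1: "\<forall>g x. x \<in> topspace (Gpow n) \<longrightarrow> Psi act n f g x \<noteq> 0 \<longrightarrow> g \<in> S"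
  proof (intro allI impI)
    fix g x assume "x \<in> topspace (Gpow n)" "Psi act n f g x \<noteq> 0"
    then have "(g, x) \<in> C" using zero unfolding \<Phi>_def by force
    then show "g \<in> S" unfolding S_def by force
  qed
  have s2: "\<forall>y. f y \<noteq> 0 \<longrightarrow> y 0 \<in> S"
  proof (intro allI impI)
    fix y assume "f y \<noteq> 0"
    then have "y \<in> Cf" using Cf(2) out by blast
    then show "y 0 \<in> S" unfolding S_def C_def by force
  qed
  show ?thesis using K cS s1 s2 unfolding \<Phi>_def by auto
qed

lemma cid: "continuous_map euclidean euclidean (\<lambda>g. g)"
  using continuous_map_id by (simp add: id_def)

lemma Psi_lc:
  assumes sm: "smooth_module sc act" and lcf: "lc (Gpow (Suc n)) f" and x: "x \<in> topspace (Gpow n)"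
  shows "lc euclidean (\<lambda>g::'g::topological_group_add. Psi act n f g x)"
  unfolding Psi_def
  by (rule lc_act[OF sm_parts(5)[OF sm] sm_parts(4)[OF sm] lc_comp[OF lcf sig_cont_g[OF x]] cm_minus[OF cid]])



lemma sum_fun_apply: "(\<Sum>a\<in>A. f a) y = (\<Sum>a\<in>A. f a y)"
  by (induction A rule: infinite_finite_induct) auto

lemma lc_top_if:
  assumes "lc X F"
  shows "lc X (\<lambda>x. if x \<in> topspace X then F x else 0)"
  unfolding lc_def
proof
  fix y assume y: "y \<in> topspace X"
  obtain U where U: "openin X U" "y \<in> U" "\<forall>z\<in>U. F z = F y" using assms y unfolding lc_def by blast
  have "U \<subseteq> topspace X" using U(1) by (rule openin_subset)
  then have "\<forall>z\<in>U. (if z \<in> topspace X then F z else 0) = (if y \<in> topspace X then F y else 0)" using U(3) y by auto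
  then show "\<exists>U. openin X U \<and> y \<in> U \<and> (\<forall>z\<in>U. (if z \<in> topspace X then F z else 0) = (if y \<in> topspace X then F y else 0))"
    using U(1,2) by blast
qed

lemma lc_post: "lc X w \<Longrightarrow> lc X (\<lambda>x. k (w x))"
  using lc_binop[of X w w "\<lambda>u v. k u"] by simp

lemma lc_eq: "lc X f \<Longrightarrow> (\<And>x. x \<in> topspace X \<Longrightarrow> g x = f x) \<Longrightarrow> lc X g"
  unfolding lc_def
proof
  fix y assume "\<forall>y\<in>topspace X. \<exists>U. openin X U \<and> y \<in> U \<and> (\<forall>z\<in>U. f z = f y)" "\<And>x. x \<in> topspace X \<Longrightarrow> g x = f x"
    "y \<in> topspace X"
  then obtain U where U: "openin X U" "y \<in> U" "\<forall>z\<in>U. f z = f y" by blast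
  have "U \<subseteq> topspace X" using U(1) by (rule openin_subset)
  then have "\<forall>z\<in>U. g z = g y" using U(3) \<open>y \<in> topspace X\<close> \<open>\<And>x. x \<in> topspace X \<Longrightarrow> g x = f x\<close> by auto
  then show "\<exists>U. openin X U \<and> y \<in> U \<and> (\<forall>z\<in>U. g z = g y)" using U(1,2) by blast
qed

lemma cc_zero: "(\<lambda>_. 0) \<in> Cc_infty Y"
  unfolding Cc_infty_iff by (intro conjI exI[of _ "{}"] lc_const) auto

lemma cc_zero': "0 \<in> Cc_infty Y"
  using cc_zero by (simp add: zero_fun_def)

lemma cc_binop:
  assumes "f \<in> Cc_infty Y" "g \<in> Cc_infty Y" "H 0 0 = 0"
  shows "(\<lambda>x. H (f x) (g x)) \<in> Cc_infty Y"
proof -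
  obtain K1 where K1: "compactin Y K1" "\<forall>y\<in>topspace Y - K1. f y = 0" using assms(1) unfolding Cc_infty_iff by blast
  obtain K2 where K2: "compactin Y K2" "\<forall>y\<in>topspace Y - K2. g y = 0" using assms(2) unfolding Cc_infty_iff by blast
  have "lc Y f" "lc Y g" using assms(1,2) unfolding Cc_infty_iff by blast+
  then have "lc Y (\<lambda>x. H (f x) (g x))" by (rule lc_binop)
  moreover have "compactin Y (K1 \<union> K2)" using K1 K2 by (simp add: compactin_Un)
  moreover have "\<forall>y\<in>topspace Y - (K1 \<union> K2). H (f y) (g y) = 0" using K1 K2 assms(3) by simp
  moreover have "\<forall>y. y \<notin> topspace Y \<longrightarrow> H (f y) (g y) = 0" using assms unfolding Cc_infty_iff by simp
  ultimately show ?thesis unfolding Cc_infty_iff by blast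
qed

lemma cc_add: fixes f g :: "'a \<Rightarrow> 'b::ab_group_add" shows "f \<in> Cc_infty Y \<Longrightarrow> g \<in> Cc_infty Y \<Longrightarrow> f + g \<in> Cc_infty Y"
  using cc_binop[of f Y g "(+)"] by (simp add: plus_fun_def)

lemma cc_diff: fixes f g :: "'a \<Rightarrow> 'b::ab_group_add" shows "f \<in> Cc_infty Y \<Longrightarrow> g \<in> Cc_infty Y \<Longrightarrow> f - g \<in> Cc_infty Y"
  using cc_binop[of f Y g "(-)"] by (simp add: fun_diff_def)

lemma cc_post: "f \<in> Cc_infty Y \<Longrightarrow> k 0 = 0 \<Longrightarrow> (\<lambda>x. k (f x)) \<in> Cc_infty Y"
  using cc_binop[of f Y f "\<lambda>u v. k u"] by simp

lemma cc_ind: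
  assumes "f \<in> Cc_infty Y" "lc Y P"
  shows "(\<lambda>y. if P y then f y else 0) \<in> Cc_infty Y"
proof -
  obtain K1 where K1: "compactin Y K1" "\<forall>y\<in>topspace Y - K1. f y = 0" using assms(1) unfolding Cc_infty_iff by blast
  have "lc Y f" using assms(1) unfolding Cc_infty_iff by blast
  then have "lc Y (\<lambda>y. if P y then f y else 0)" using lc_binop[of Y P f "\<lambda>b v. if b then v else 0"] assms(2) by simp
  moreover have "\<forall>y\<in>topspace Y - K1. (if P y then f y else 0) = 0" using K1 by simp
  moreover have "\<forall>y. y \<notin> topspace Y \<longrightarrow> (if P y then f y else 0) = 0" using assms unfolding Cc_infty_iff by simp
  ultimately show ?thesis using K1(1) unfolding Cc_infty_iff by blast
qed

lemma trans_cont: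
  "continuous_map (Gpow m) (Gpow m) (\<lambda>x. restrict (\<lambda>i. a + x i) {..<m} :: nat \<Rightarrow> 'g::topological_monoid_add)"
  unfolding continuous_map_componentwise
proof
  show "(\<lambda>x. restrict (\<lambda>i. a + x i) {..<m} :: nat \<Rightarrow> 'g) ` topspace (Gpow m) \<subseteq> extensional {..<m}" by auto
  show "\<forall>k\<in>{..<m}. continuous_map (Gpow m) euclidean (\<lambda>x. restrict (\<lambda>i. a + x i) {..<m} k :: 'g)"
  proof
    fix k assume k: "k \<in> {..<m}"
    have "continuous_map (Gpow m) euclidean (\<lambda>x. a + x k :: 'g)" using k by (intro cm_add proj_cont) auto
    moreover have "(\<lambda>x. restrict (\<lambda>i. a + x i) {..<m} k :: 'g) = (\<lambda>x. a + x k)" using k by simp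
    ultimately show "continuous_map (Gpow m) euclidean (\<lambda>x. restrict (\<lambda>i. a + x i) {..<m} k :: 'g)" by simp
  qed
qed

lemma trans_inv:
  fixes x :: "nat \<Rightarrow> 'g::topological_group_add"
  assumes "x \<in> topspace (Gpow m)"
  shows "restrict (\<lambda>i. a + restrict (\<lambda>i. - a + x i) {..<m} i) {..<m} = x"
proof
  fix i show "restrict (\<lambda>i. a + restrict (\<lambda>i. - a + x i) {..<m} i) {..<m} i = x i"
    using assms by (auto simp: PiE_def extensional_def)
qed

lemma cc_G:
  fixes f :: "(nat \<Rightarrow> 'g::topological_group_add) \<Rightarrow> 'v::ab_group_add"
  assumes sm: "smooth_module sc act" and f: "f \<in> Cc_infty (Gpow m)"
  shows "G_act_fun act m h f \<in> Cc_infty (Gpow m)"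
proof -
  obtain Cf where Cf: "compactin (Gpow m) Cf" "\<forall>y\<in>topspace (Gpow m) - Cf. f y = 0"
    and lcf: "lc (Gpow m) f" using f unfolding Cc_infty_iff by blast
  let ?t = "\<lambda>x. restrict (\<lambda>i. - h + x i) {..<m} :: nat \<Rightarrow> 'g"
  have "lc (Gpow m) (\<lambda>x. act h (f (?t x)))" by (rule lc_post[OF lc_comp[OF lcf trans_cont]])
  then have "lc (Gpow m) (\<lambda>x. if x \<in> topspace (Gpow m) then act h (f (?t x)) else 0)" by (rule lc_top_if)
  then have lcG: "lc (Gpow m) (G_act_fun act m h f)" unfolding G_act_fun_def[abs_def] by simp
  let ?C = "(\<lambda>x. restrict (\<lambda>i. h + x i) {..<m}) ` Cf"
  have cC: "compactin (Gpow m) ?C" by (rule image_compactin[OF Cf(1) trans_cont])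
  have z: "\<forall>y\<in>topspace (Gpow m) - ?C. G_act_fun act m h f y = 0"
  proof
    fix y assume y: "y \<in> topspace (Gpow m) - ?C"
    show "G_act_fun act m h f y = 0"
    proof (rule ccontr)
      assume "G_act_fun act m h f y \<noteq> 0"
      then have "f (?t y) \<noteq> 0" using y by (auto simp: G_act_fun_def act_zero[OF sm])
      moreover have "?t y \<in> topspace (Gpow m)" by simp
      ultimately have "?t y \<in> Cf" using Cf(2) by blast
      then have "restrict (\<lambda>i. h + ?t y i) {..<m} \<in> ?C" by blast
      then show False using y trans_inv[of y m h] by simp
    qed
  qed
  have "\<forall>y. y \<notin> topspace (Gpow m) \<longrightarrow> G_act_fun act m h f y = 0" by (simp add: G_act_fun_def)
  then show ?thesis using lcG cC z unfolding Cc_infty_iff by blast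
qed

lemma G_comp:
  fixes f :: "(nat \<Rightarrow> 'g::topological_group_add) \<Rightarrow> 'v::ab_group_add"
  assumes sm: "smooth_module sc act"
  shows "G_act_fun act m h1 (G_act_fun act m h2 f) = G_act_fun act m (h1 + h2) f"
proof
  fix x
  show "G_act_fun act m h1 (G_act_fun act m h2 f) x = G_act_fun act m (h1 + h2) f x"
  proof (cases "x \<in> topspace (Gpow m)")
    case True
    have e: "restrict (\<lambda>i. - h2 + restrict (\<lambda>i. - h1 + x i) {..<m} i) {..<m} = restrict (\<lambda>i. - (h1 + h2) + x i) {..<m}"
    proof (rule restrict_ext)
      fix i assume "i \<in> {..<m}"
      then show "- h2 + restrict (\<lambda>i. - h1 + x i) {..<m} i = - (h1 + h2) + x i"
        by (simp only: restrict_apply' minus_add add.assoc)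
    qed
    have t1: "restrict (\<lambda>i. - h1 + x i) {..<m} \<in> topspace (Gpow m)" by simp
    have "G_act_fun act m h1 (G_act_fun act m h2 f) x = act h1 (G_act_fun act m h2 f (restrict (\<lambda>i. - h1 + x i) {..<m}))"
      using True by (simp only: G_act_fun_def if_True)
    also have "\<dots> = act h1 (act h2 (f (restrict (\<lambda>i. - h2 + restrict (\<lambda>i. - h1 + x i) {..<m} i) {..<m})))"
      using t1 by (simp only: G_act_fun_def if_True)
    also have "\<dots> = act h1 (act h2 (f (restrict (\<lambda>i. - (h1 + h2) + x i) {..<m})))" by (simp only: e)
    also have "\<dots> = G_act_fun act m (h1 + h2) f x" using True by (simp only: G_act_fun_def if_True sm_parts(4)[OF sm])
    finally show ?thesis .
  next
    case False then show ?thesis by (simp add: G_act_fun_def)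
  qed
qed

lemma G_zero:
  fixes f :: "(nat \<Rightarrow> 'g::topological_group_add) \<Rightarrow> 'v::ab_group_add"
  assumes sm: "smooth_module sc act" and f: "\<forall>y. y \<notin> topspace (Gpow m) \<longrightarrow> f y = 0"
  shows "G_act_fun act m 0 f = f"
proof
  fix x
  show "G_act_fun act m 0 f x = f x"
  proof (cases "x \<in> topspace (Gpow m)")
    case True
    have "restrict (\<lambda>i. - 0 + x i) {..<m} = x" using True by (auto simp: PiE_def extensional_def)
    then show ?thesis using True by (simp add: G_act_fun_def sm_parts(3)[OF sm])
  next
    case False then show ?thesis using f by (simp add: G_act_fun_def)
  qed
qed

lemma Psi_G:
  fixes f :: "(nat \<Rightarrow> 'g::topological_group_add) \<Rightarrow> 'v::ab_group_add"
  assumes sm: "smooth_module sc act"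
  shows "Psi act n (G_act_fun act (Suc n) h f) g x = Psi act n f (- h + g) x"
proof -
  have "G_act_fun act (Suc n) h f (sig n g x) = act h (f (sig n (- h + g) x))"
    using sig_top[of n g x] by (simp only: G_act_fun_def if_True sig_shift)
  then have "Psi act n (G_act_fun act (Suc n) h f) g x = act (- g) (act h (f (sig n (- h + g) x)))"
    by (simp only: Psi_def)
  also have "\<dots> = act (- g + h) (f (sig n (- h + g) x))" by (simp add: sm_parts(4)[OF sm])
  also have "- g + h = - (- h + g)" by (simp add: minus_add)
  finally show ?thesis by (simp add: Psi_def)
qed



lemma T_repr:
  fixes f :: "(nat \<Rightarrow> 'g::{topological_group_add,t2_space}) \<Rightarrow> 'v::ab_group_add"
  assumes vs: "vector_space sc" and hm: "left_haar_measure M" and K: "cog K"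
    and inv: "\<And>g x k. x \<in> topspace (Gpow n) \<Longrightarrow> k \<in> K \<Longrightarrow> Psi act n f (g + k) x = Psi act n f g x"
    and A: "finite A" "disj_cos K A"
    and supp: "\<And>g x. x \<in> topspace (Gpow n) \<Longrightarrow> Psi act n f g x \<noteq> 0 \<Longrightarrow> \<exists>a\<in>A. g \<in> (+) a ` K"
    and x: "x \<in> topspace (Gpow n)"
  shows "T_op sc M act n f x = sc (complex_of_real (measure M K)) (\<Sum>a\<in>A. Psi act n f a x)"
  unfolding T_op_Psi[OF x]
  by (rule haar_inv[OF vs hm K A]) (use inv supp x in auto)

lemma good_cover:
  fixes f :: "(nat \<Rightarrow> 'g::{topological_group_add,t2_space}) \<Rightarrow> 'v::ab_group_add"
  assumes lg: "l_group TYPE('g)" and sm: "smooth_module sc act" and f: "f \<in> Cc_infty (Gpow (Suc n))"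
    and K': "cog K'"
  shows "\<exists>K S. cog K \<and> K \<subseteq> K' \<and> compact S
    \<and> (\<forall>g x k. x \<in> topspace (Gpow n) \<longrightarrow> k \<in> K \<longrightarrow> Psi act n f (g + k) x = Psi act n f g x)
    \<and> (\<forall>g x. x \<in> topspace (Gpow n) \<longrightarrow> Psi act n f g x \<noteq> 0 \<longrightarrow> g \<in> S)
    \<and> (\<forall>y. f y \<noteq> 0 \<longrightarrow> y 0 \<in> S)"
proof -
  obtain K S where KS: "cog K" "compact S"
    "\<forall>g x k. x \<in> topspace (Gpow n) \<longrightarrow> k \<in> K \<longrightarrow> Psi act n f (g + k) x = Psi act n f g x"
    "\<forall>g x. x \<in> topspace (Gpow n) \<longrightarrow> Psi act n f g x \<noteq> 0 \<longrightarrow> g \<in> S"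
    "\<forall>y. f y \<noteq> 0 \<longrightarrow> y 0 \<in> S"
    using f_good[OF lg sm f] by blast
  have "cog (K \<inter> K')" using cog_Int[OF KS(1) K'] .
  then show ?thesis using KS by (intro exI[of _ "K \<inter> K'"] exI[of _ S]) auto
qed

lemma T_in_Cc:
  fixes f :: "(nat \<Rightarrow> 'g::{topological_group_add,t2_space}) \<Rightarrow> 'v::ab_group_add"
  assumes lg: "l_group TYPE('g)" and hm: "left_haar_measure M" and sm: "smooth_module sc act"
    and f: "f \<in> Cc_infty (Gpow (Suc n))"
  shows "T_op sc M act n f \<in> Cc_infty (Gpow n)"
proof -
  have vs: "vector_space sc" using sm_parts(1)[OF sm] .
  obtain K S where KS: "cog K" "compact S"
    "\<forall>g x k. x \<in> topspace (Gpow n) \<longrightarrow> k \<in> K \<longrightarrow> Psi act n f (g + k) x = Psi act n f g x"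
    "\<forall>g x. x \<in> topspace (Gpow n) \<longrightarrow> Psi act n f g x \<noteq> 0 \<longrightarrow> g \<in> S"
    using f_good[OF lg sm f] by blast
  obtain A where A: "finite A" "S \<subseteq> (\<Union>a\<in>A. (+) a ` K)" "disj_cos K A" using cover_cosets[OF KS(2,1)] by blast
  let ?c = "complex_of_real (measure M K)"
  have inv: "\<And>g x k. x \<in> topspace (Gpow n) \<Longrightarrow> k \<in> K \<Longrightarrow> Psi act n f (g + k) x = Psi act n f g x"
    using KS(3) by blast
  have supp: "\<exists>a\<in>A. g \<in> (+) a ` K" if "y \<in> topspace (Gpow n)" "Psi act n f g y \<noteq> 0" for g y
  proof -
    have "g \<in> S" using KS(4) that by blast
    then have "g \<in> (\<Union>a\<in>A. (+) a ` K)" using A(2) by blast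
    then show ?thesis by blast
  qed
  have rep: "T_op sc M act n f x = sc ?c (\<Sum>a\<in>A. Psi act n f a x)" if x: "x \<in> topspace (Gpow n)" for x
    by (rule T_repr[OF vs hm KS(1) inv A(1,3) supp x])
  obtain Cf where Cf: "compactin (Gpow (Suc n)) Cf" "\<forall>y\<in>topspace (Gpow (Suc n)) - Cf. f y = 0"
    and lcf: "lc (Gpow (Suc n)) f" using f unfolding Cc_infty_iff by blast
  have "lc (Gpow n) (\<lambda>x. Psi act n f a x)" for a
    unfolding Psi_def using lc_post[OF lc_comp[OF lcf sig_cont_x[of n a]], of "act (- a)"] .
  then have "lc (Gpow n) (\<lambda>x. \<Sum>a\<in>A. Psi act n f a x)"
    using lc_sum[OF A(1), of "Gpow n" "\<lambda>a x. Psi act n f a x"] by blast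
  then have "lc (Gpow n) (\<lambda>x. sc ?c (\<Sum>a\<in>A. Psi act n f a x))"
    using lc_post[of "Gpow n" "\<lambda>x. \<Sum>a\<in>A. Psi act n f a x" "sc ?c"] by blast
  then have lcT: "lc (Gpow n) (T_op sc M act n f)" by (rule lc_eq) (rule rep)
  let ?D = "del n ` Cf"
  have cD: "compactin (Gpow n) ?D" by (rule image_compactin[OF Cf(1) del_cont])
  have z: "\<forall>x\<in>topspace (Gpow n) - ?D. T_op sc M act n f x = 0"
  proof
    fix x assume x: "x \<in> topspace (Gpow n) - ?D"
    have "Psi act n f g x = 0" for g
    proof -
      have "f (sig n g x) = 0"
      proof (rule ccontr)
        assume "f (sig n g x) \<noteq> 0"
        then have "sig n g x \<in> Cf" using Cf(2) sig_top by blast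
        then have "del n (sig n g x) \<in> ?D" by blast
        then show False using x del_sig[of x n g] by simp
      qed
      then show ?thesis by (simp add: Psi_def act_zero[OF sm])
    qed
    then show "T_op sc M act n f x = 0" using x by (simp add: T_op_Psi haar_vanish)
  qed
  have "\<forall>x. x \<notin> topspace (Gpow n) \<longrightarrow> T_op sc M act n f x = 0" by (simp add: T_op_out)
  then show ?thesis using lcT cD z unfolding Cc_infty_iff by blast
qed

lemma T_add:
  fixes f1 f2 :: "(nat \<Rightarrow> 'g::{topological_group_add,t2_space}) \<Rightarrow> 'v::ab_group_add"
  assumes lg: "l_group TYPE('g)" and hm: "left_haar_measure M" and sm: "smooth_module sc act"
    and f1: "f1 \<in> Cc_infty (Gpow (Suc n))" and f2: "f2 \<in> Cc_infty (Gpow (Suc n))"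
  shows "T_op sc M act n (f1 + f2) = T_op sc M act n f1 + T_op sc M act n f2"
proof
  fix x
  have vs: "vector_space sc" using sm_parts(1)[OF sm] .
  interpret vs: vector_space sc by fact
  obtain K1 S1 where KS1: "cog K1" "compact S1"
    "\<forall>g x k. x \<in> topspace (Gpow n) \<longrightarrow> k \<in> K1 \<longrightarrow> Psi act n f1 (g + k) x = Psi act n f1 g x"
    "\<forall>g x. x \<in> topspace (Gpow n) \<longrightarrow> Psi act n f1 g x \<noteq> 0 \<longrightarrow> g \<in> S1"
    using f_good[OF lg sm f1] by blast
  obtain K S2 where KS2: "cog K" "K \<subseteq> K1" "compact S2"
    "\<forall>g x k. x \<in> topspace (Gpow n) \<longrightarrow> k \<in> K \<longrightarrow> Psi act n f2 (g + k) x = Psi act n f2 g x"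
    "\<forall>g x. x \<in> topspace (Gpow n) \<longrightarrow> Psi act n f2 g x \<noteq> 0 \<longrightarrow> g \<in> S2"
    using good_cover[OF lg sm f2 KS1(1)] by blast
  obtain A where A: "finite A" "S1 \<union> S2 \<subseteq> (\<Union>a\<in>A. (+) a ` K)" "disj_cos K A"
    using cover_cosets[OF compact_Un[OF KS1(2) KS2(3)] KS2(1)] by blast
  have PS: "Psi act n (f1 + f2) g y = Psi act n f1 g y + Psi act n f2 g y" for g y
    by (simp add: Psi_def act_add[OF sm])
  let ?c = "complex_of_real (measure M K)"
  show "T_op sc M act n (f1 + f2) x = (T_op sc M act n f1 + T_op sc M act n f2) x"
  proof (cases "x \<in> topspace (Gpow n)")
    case x: True
    have inv1: "\<And>g x k. x \<in> topspace (Gpow n) \<Longrightarrow> k \<in> K \<Longrightarrow> Psi act n f1 (g + k) x = Psi act n f1 g x"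
      using KS1(3) KS2(2) by blast
    have inv2: "\<And>g x k. x \<in> topspace (Gpow n) \<Longrightarrow> k \<in> K \<Longrightarrow> Psi act n f2 (g + k) x = Psi act n f2 g x"
      using KS2(4) by blast
    have supp1: "\<exists>a\<in>A. g \<in> (+) a ` K" if "y \<in> topspace (Gpow n)" "Psi act n f1 g y \<noteq> 0" for g y
    proof -
      have "g \<in> S1" using KS1(4) that by blast
      then have "g \<in> (\<Union>a\<in>A. (+) a ` K)" using A(2) by blast
      then show ?thesis by blast
    qed
    have supp2: "\<exists>a\<in>A. g \<in> (+) a ` K" if "y \<in> topspace (Gpow n)" "Psi act n f2 g y \<noteq> 0" for g y
    proof -
      have "g \<in> S2" using KS2(5) that by blast
      then have "g \<in> (\<Union>a\<in>A. (+) a ` K)" using A(2) by blast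
      then show ?thesis by blast
    qed
    have inv3: "\<And>g x k. x \<in> topspace (Gpow n) \<Longrightarrow> k \<in> K \<Longrightarrow> Psi act n (f1 + f2) (g + k) x = Psi act n (f1 + f2) g x"
      unfolding PS using inv1 inv2 by simp
    have supp3: "\<exists>a\<in>A. g \<in> (+) a ` K" if "y \<in> topspace (Gpow n)" "Psi act n (f1 + f2) g y \<noteq> 0" for g y
    proof (cases "Psi act n f1 g y = 0")
      case True
      then have "Psi act n f2 g y \<noteq> 0" using that(2) unfolding PS by simp
      then show ?thesis using supp2 that(1) by blast
    next
      case False then show ?thesis using supp1 that(1) by blast
    qed
    have r1: "T_op sc M act n f1 x = sc ?c (\<Sum>a\<in>A. Psi act n f1 a x)"
      by (rule T_repr[OF vs hm KS2(1) inv1 A(1,3) supp1 x])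
    have r2: "T_op sc M act n f2 x = sc ?c (\<Sum>a\<in>A. Psi act n f2 a x)"
      by (rule T_repr[OF vs hm KS2(1) inv2 A(1,3) supp2 x])
    have r3: "T_op sc M act n (f1 + f2) x = sc ?c (\<Sum>a\<in>A. Psi act n (f1 + f2) a x)"
      by (rule T_repr[OF vs hm KS2(1) inv3 A(1,3) supp3 x])
    show ?thesis unfolding plus_fun_apply r1 r2 r3 PS sum.distrib vs.scale_right_distrib ..
  next
    case False then show ?thesis by (simp add: T_op_out)
  qed
qed

lemma T_scale:
  fixes f :: "(nat \<Rightarrow> 'g::{topological_group_add,t2_space}) \<Rightarrow> 'v::ab_group_add"
  assumes lg: "l_group TYPE('g)" and hm: "left_haar_measure M" and sm: "smooth_module sc act"
    and f: "f \<in> Cc_infty (Gpow (Suc n))"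
  shows "T_op sc M act n (\<lambda>y. sc c0 (f y)) = (\<lambda>x. sc c0 (T_op sc M act n f x))"
proof
  fix x
  have vs: "vector_space sc" using sm_parts(1)[OF sm] .
  interpret vs: vector_space sc by fact
  obtain K S where KS: "cog K" "compact S"
    "\<forall>g x k. x \<in> topspace (Gpow n) \<longrightarrow> k \<in> K \<longrightarrow> Psi act n f (g + k) x = Psi act n f g x"
    "\<forall>g x. x \<in> topspace (Gpow n) \<longrightarrow> Psi act n f g x \<noteq> 0 \<longrightarrow> g \<in> S"
    using f_good[OF lg sm f] by blast
  obtain A where A: "finite A" "S \<subseteq> (\<Union>a\<in>A. (+) a ` K)" "disj_cos K A" using cover_cosets[OF KS(2,1)] by blast
  have PS: "Psi act n (\<lambda>y. sc c0 (f y)) g y = sc c0 (Psi act n f g y)" for g y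
    by (simp add: Psi_def act_scale[OF sm])
  let ?c = "complex_of_real (measure M K)"
  show "T_op sc M act n (\<lambda>y. sc c0 (f y)) x = sc c0 (T_op sc M act n f x)"
  proof (cases "x \<in> topspace (Gpow n)")
    case x: True
    have inv: "\<And>g x k. x \<in> topspace (Gpow n) \<Longrightarrow> k \<in> K \<Longrightarrow> Psi act n f (g + k) x = Psi act n f g x"
      using KS(3) by blast
    have supp: "\<exists>a\<in>A. g \<in> (+) a ` K" if "y \<in> topspace (Gpow n)" "Psi act n f g y \<noteq> 0" for g y
    proof -
      have "g \<in> S" using KS(4) that by blast
      then have "g \<in> (\<Union>a\<in>A. (+) a ` K)" using A(2) by blast
      then show ?thesis by blast
    qed
    have inv2: "\<And>g x k. x \<in> topspace (Gpow n) \<Longrightarrow> k \<in> K \<Longrightarrow> Psi act n (\<lambda>y. sc c0 (f y)) (g + k) x = Psi act n (\<lambda>y. sc c0 (f y)) g x"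
      unfolding PS using inv by simp
    have supp2: "\<exists>a\<in>A. g \<in> (+) a ` K" if "y \<in> topspace (Gpow n)" "Psi act n (\<lambda>y. sc c0 (f y)) g y \<noteq> 0" for g y
    proof -
      have "Psi act n f g y \<noteq> 0" using that(2) unfolding PS by auto
      then show ?thesis using supp that(1) by blast
    qed
    have r1: "T_op sc M act n f x = sc ?c (\<Sum>a\<in>A. Psi act n f a x)"
      by (rule T_repr[OF vs hm KS(1) inv A(1,3) supp x])
    have r2: "T_op sc M act n (\<lambda>y. sc c0 (f y)) x = sc ?c (\<Sum>a\<in>A. Psi act n (\<lambda>y. sc c0 (f y)) a x)"
      by (rule T_repr[OF vs hm KS(1) inv2 A(1,3) supp2 x])
    show ?thesis unfolding r1 r2 PS vs.scale_sum_right[symmetric] vs.scale_left_commute[of ?c c0] ..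
  next
    case False then show ?thesis by (simp add: T_op_out)
  qed
qed

lemma T_G:
  fixes f :: "(nat \<Rightarrow> 'g::{topological_group_add,t2_space}) \<Rightarrow> 'v::ab_group_add"
  assumes hm: "left_haar_measure M" and sm: "smooth_module sc act" and f: "f \<in> Cc_infty (Gpow (Suc n))"
  shows "T_op sc M act n (G_act_fun act (Suc n) h f) = T_op sc M act n f"
proof
  fix x
  have lcf: "lc (Gpow (Suc n)) f" using f unfolding Cc_infty_iff by blast
  show "T_op sc M act n (G_act_fun act (Suc n) h f) x = T_op sc M act n f x"
  proof (cases "x \<in> topspace (Gpow n)")
    case x: True
    have "T_op sc M act n (G_act_fun act (Suc n) h f) x = haar_int sc M (\<lambda>g. Psi act n f (- h + g) x)"
      unfolding T_op_Psi[OF x] Psi_G[OF sm] ..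
    also have "\<dots> = haar_int sc M (\<lambda>g. Psi act n f g x)"
      by (rule haar_shift[OF hm Psi_lc[OF sm lcf x]])
    finally show ?thesis unfolding T_op_Psi[OF x] .
  next
    case False then show ?thesis by (simp add: T_op_out)
  qed
qed

lemma T_zero:
  assumes sm: "smooth_module sc act"
  shows "T_op sc M act n 0 = (\<lambda>_. 0)"
proof
  fix x show "T_op sc M act n 0 x = 0"
    by (cases "x \<in> topspace (Gpow n)") (simp_all add: T_op_Psi T_op_out Psi_def act_zero[OF sm] haar_vanish)
qed



lemma fun_module:
  assumes "vector_space sc"
  shows "module (\<lambda>c (f::'a \<Rightarrow> 'v::ab_group_add) x. sc c (f x))"
proof -
  interpret vs: vector_space sc by fact
  show ?thesis
    by unfold_locales (simp_all add: fun_eq_iff vs.scale_right_distrib vs.scale_left_distrib)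
qed

lemma T_surj:
  fixes \<phi> :: "(nat \<Rightarrow> 'g::{topological_group_add,t2_space}) \<Rightarrow> 'v::ab_group_add"
  assumes lg: "l_group TYPE('g)" and hm: "left_haar_measure M" and sm: "smooth_module sc act"
    and phi: "\<phi> \<in> Cc_infty (Gpow n)"
  shows "\<exists>f\<in>Cc_infty (Gpow (Suc n)). T_op sc M act n f = \<phi>"
proof -
  have vs: "vector_space sc" using sm_parts(1)[OF sm] .
  interpret vs: vector_space sc by fact
  obtain K :: "'g set" where K: "cog K" using exists_cog[OF lg, of UNIV] by blast
  have mu: "measure M K > 0" using cog_meas(4)[OF hm K] .
  define c where "c = complex_of_real (1 / measure M K)"
  have K0: "(+) (0::'g) ` K = K" by simp
  obtain C\<phi> where C\<phi>: "compactin (Gpow n) C\<phi>" "\<forall>y\<in>topspace (Gpow n) - C\<phi>. \<phi> y = 0"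
    and lcphi: "lc (Gpow n) \<phi>" and out: "\<forall>y. y \<notin> topspace (Gpow n) \<longrightarrow> \<phi> y = 0"
    using phi unfolding Cc_infty_iff by blast
  define f where "f y = (if y \<in> topspace (Gpow (Suc n)) then
      (if y 0 \<in> (+) 0 ` K then act (y 0) (sc c (\<phi> (del n y))) else 0) else 0)" for y
  have lc1: "lc (Gpow (Suc n)) (\<lambda>y. act (y 0) (sc c (\<phi> (del n y))))"
    by (rule lc_act[OF sm_parts(5)[OF sm] sm_parts(4)[OF sm] lc_post[OF lc_comp[OF lcphi del_cont]] proj0_cont])
  have lc2: "lc (Gpow (Suc n)) (\<lambda>y. y 0 \<in> (+) 0 ` K)" by (rule lc_coset[OF K proj0_cont])
  have "lc (Gpow (Suc n)) (\<lambda>y. if y 0 \<in> (+) 0 ` K then act (y 0) (sc c (\<phi> (del n y))) else 0)"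
    using lc_binop[OF lc2 lc1, of "\<lambda>b v. if b then v else 0"] by simp
  then have lcf: "lc (Gpow (Suc n)) f" unfolding f_def[abs_def] by (rule lc_top_if)
  let ?C = "(\<lambda>p. sig n (fst p) (snd p)) ` (K \<times> C\<phi>)"
  have "compactin (prod_topology euclidean (Gpow n)) (K \<times> C\<phi>)"
    using K C\<phi>(1) by (simp add: compactin_Times cog_def)
  then have cC: "compactin (Gpow (Suc n)) ?C" by (rule image_compactin[OF _ sig_cont])
  have z: "\<forall>y\<in>topspace (Gpow (Suc n)) - ?C. f y = 0"
  proof
    fix y assume y: "y \<in> topspace (Gpow (Suc n)) - ?C"
    show "f y = 0"
    proof (rule ccontr)
      assume nz: "f y \<noteq> 0"
      then have y0: "y 0 \<in> K" using y by (auto simp: f_def split: if_splits)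
      have "\<phi> (del n y) \<noteq> 0" using nz y by (auto simp: f_def act_zero[OF sm] split: if_splits)
      then have "del n y \<in> C\<phi>" using C\<phi>(2) del_top by blast
      then have "sig n (fst (y 0, del n y)) (snd (y 0, del n y)) \<in> ?C" using y0 by blast
      then show False using y sig_del[of y n] by simp
    qed
  qed
  have "\<forall>y. y \<notin> topspace (Gpow (Suc n)) \<longrightarrow> f y = 0" by (simp add: f_def)
  then have fC: "f \<in> Cc_infty (Gpow (Suc n))" using lcf cC z unfolding Cc_infty_iff by blast
  have "T_op sc M act n f = \<phi>"
  proof
    fix x show "T_op sc M act n f x = \<phi> x"
    proof (cases "x \<in> topspace (Gpow n)")
      case x: True
      have P: "Psi act n f g x = (\<Sum>a\<in>{0}. if g \<in> (+) a ` K then sc c (\<phi> x) else 0)" for g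
        using sig_top[of n g x] by (simp add: Psi_def f_def del_sig[OF x] act_inv[OF sm] act_zero[OF sm] del: image_add_0)
      have "T_op sc M act n f x = haar_int sc M (\<lambda>g. Psi act n f g x)" by (rule T_op_Psi[OF x])
      also have "\<dots> = (\<Sum>a\<in>{0::'g}. sc (complex_of_real (measure M K)) (sc c (\<phi> x)))"
        by (rule haar_cosets[where w="\<lambda>_. sc c (\<phi> x)" and A="{0}", OF vs hm K]) (simp_all add: disj_cos_def P)
      also have "\<dots> = sc (complex_of_real (measure M K) * c) (\<phi> x)" by simp
      also have "complex_of_real (measure M K) * c = 1"
        using mu by (simp add: c_def of_real_mult[symmetric])
      finally show ?thesis by simp
    next
      case False then show ?thesis using out by (simp add: T_op_out)
    qed
  qed
  then show ?thesis using fC by blast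
qed



lemma ker_span:
  fixes f :: "(nat \<Rightarrow> 'g::{topological_group_add,t2_space}) \<Rightarrow> 'v::ab_group_add"
  assumes lg: "l_group TYPE('g)" and hm: "left_haar_measure M" and sm: "smooth_module sc act"
    and f: "f \<in> Cc_infty (Gpow (Suc n))" and Tf: "T_op sc M act n f = (\<lambda>_. 0)"
  shows "f \<in> fun_cspan sc {G_act_fun act (Suc n) g f - f | g f. f \<in> Cc_infty (Gpow (Suc n))}"
proof -
  have vs: "vector_space sc" using sm_parts(1)[OF sm] .
  interpret vs: vector_space sc by fact
  interpret FM: module "\<lambda>c (f::(nat \<Rightarrow> 'g) \<Rightarrow> 'v) x. sc c (f x)" by (rule fun_module[OF vs])
  obtain K S where KS: "cog K" "compact S"
    "\<forall>g x k. x \<in> topspace (Gpow n) \<longrightarrow> k \<in> K \<longrightarrow> Psi act n f (g + k) x = Psi act n f g x"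
    "\<forall>g x. x \<in> topspace (Gpow n) \<longrightarrow> Psi act n f g x \<noteq> 0 \<longrightarrow> g \<in> S"
    "\<forall>y. f y \<noteq> 0 \<longrightarrow> y 0 \<in> S"
    using f_good[OF lg sm f] by blast
  obtain A where A: "finite A" "S \<subseteq> (\<Union>a\<in>A. (+) a ` K)" "disj_cos K A" using cover_cosets[OF KS(2,1)] by blast
  have sg: "is_subgroup K" using KS(1) by (simp add: cog_def)
  define fc where "fc a = (\<lambda>y. if y 0 \<in> (+) a ` K then f y else 0)" for a
  define fp where "fp a = G_act_fun act (Suc n) (- a) (fc a)" for a
  have fc_cc: "fc a \<in> Cc_infty (Gpow (Suc n))" for a
    unfolding fc_def by (rule cc_ind[OF f lc_coset[OF KS(1) proj0_cont]])
  have fp_cc: "fp a \<in> Cc_infty (Gpow (Suc n))" for a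
    unfolding fp_def by (rule cc_G[OF sm fc_cc])
  have fout: "\<forall>y. y \<notin> topspace (Gpow (Suc n)) \<longrightarrow> f y = 0" using f unfolding Cc_infty_iff by blast
  have c1: "f = (\<Sum>a\<in>A. fc a)"
  proof
    fix y
    show "f y = (\<Sum>a\<in>A. fc a) y"
    proof (cases "f y = 0")
      case True
      then show ?thesis unfolding sum_fun_apply fc_def by (simp add: sum.neutral)
    next
      case False
      then have "y 0 \<in> (\<Union>a\<in>A. (+) a ` K)" using KS(5) A(2) by blast
      then obtain a where a: "a \<in> A" "y 0 \<in> (+) a ` K" by blast
      have "\<And>b. b \<in> A \<Longrightarrow> b \<noteq> a \<Longrightarrow> y 0 \<notin> (+) b ` K" using A(3) a unfolding disj_cos_def by blast
      then have "(\<Sum>b\<in>A. if y 0 \<in> (+) b ` K then f y else 0) = f y"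
        using sum_if_single[OF A(1) a(1), of "\<lambda>b. y 0 \<in> (+) b ` K" "\<lambda>_. f y"] a(2) by blast
      then show ?thesis unfolding sum_fun_apply fc_def by simp
    qed
  qed
  have c2: "G_act_fun act (Suc n) a (fp a) = fc a" for a
  proof -
    have "G_act_fun act (Suc n) a (fp a) = G_act_fun act (Suc n) (a + - a) (fc a)"
      unfolding fp_def by (rule G_comp[OF sm])
    also have "\<dots> = fc a" using G_zero[OF sm] fc_cc[of a] unfolding Cc_infty_iff by simp
    finally show ?thesis .
  qed
  have c3: "(\<Sum>a\<in>A. fp a) = 0"
  proof
    fix y
    show "(\<Sum>a\<in>A. fp a) y = 0 y"
    proof (cases "y \<in> topspace (Gpow (Suc n))")
      case False
      then show ?thesis unfolding sum_fun_apply fp_def by (simp add: G_act_fun_def)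
    next
      case y: True
      define ya where "ya a = restrict (\<lambda>i. a + y i) {..<Suc n}" for a
      have ya0: "ya a 0 = a + y 0" for a by (simp add: ya_def)
      have fpy: "fp a y = act (- a) (fc a (ya a))" for a
        using y by (simp add: fp_def G_act_fun_def ya_def)
      have fcy: "fc a (ya a) = (if y 0 \<in> K then f (ya a) else 0)" for a
        by (simp add: fc_def ya0 mem_coset)
      show ?thesis
      proof (cases "y 0 \<in> K")
        case False
        then show ?thesis unfolding sum_fun_apply fpy fcy by (simp add: act_zero[OF sm])
      next
        case y0: True
        define x where "x = del n y"
        have x: "x \<in> topspace (Gpow n)" unfolding x_def by (rule del_top)
        have inv: "\<And>g x k. x \<in> topspace (Gpow n) \<Longrightarrow> k \<in> K \<Longrightarrow> Psi act n f (g + k) x = Psi act n f g x"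
          using KS(3) by blast
        have supp: "\<exists>a\<in>A. g \<in> (+) a ` K" if "z \<in> topspace (Gpow n)" "Psi act n f g z \<noteq> 0" for g z
        proof -
          have "g \<in> S" using KS(4) that by blast
          then have "g \<in> (\<Union>a\<in>A. (+) a ` K)" using A(2) by blast
          then show ?thesis by blast
        qed
        have "0 = T_op sc M act n f x" using Tf by simp
        also have "\<dots> = sc (complex_of_real (measure M K)) (\<Sum>a\<in>A. Psi act n f a x)"
          by (rule T_repr[OF vs hm KS(1) inv A(1,3) supp x])
        finally have "sc (complex_of_real (measure M K)) (\<Sum>a\<in>A. Psi act n f a x) = 0" by simp
        moreover have "complex_of_real (measure M K) \<noteq> 0" using cog_meas(4)[OF hm KS(1)] by simp
        ultimately have s0: "(\<Sum>a\<in>A. Psi act n f a x) = 0" by simp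
        have ps: "Psi act n f a x = act (- y 0) (act (- a) (f (ya a)))" for a
        proof -
          have "Psi act n f a x = Psi act n f (a + y 0) x" using inv[OF x y0] by simp
          also have "sig n (a + y 0) x = ya a"
            unfolding x_def ya_def sig_shift[symmetric] sig_del[OF y] ..
          then have "Psi act n f (a + y 0) x = act (- (a + y 0)) (f (ya a))" by (simp add: Psi_def)
          also have "\<dots> = act (- y 0 + - a) (f (ya a))" by (simp only: minus_add)
          also have "\<dots> = act (- y 0) (act (- a) (f (ya a)))" by (rule sm_parts(4)[OF sm])
          finally show ?thesis .
        qed
        have "act (- y 0) (\<Sum>a\<in>A. act (- a) (f (ya a))) = 0"
          using s0 unfolding ps act_sum[OF sm, symmetric] .
        then have "act (y 0) (act (- y 0) (\<Sum>a\<in>A. act (- a) (f (ya a)))) = 0" by (simp add: act_zero[OF sm])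
        then have "(\<Sum>a\<in>A. act (- a) (f (ya a))) = 0" by (simp add: act_inv2[OF sm])
        then show ?thesis unfolding sum_fun_apply fpy fcy using y0 by simp
      qed
    qed
  qed
  have c4: "f = (\<Sum>a\<in>A. G_act_fun act (Suc n) a (fp a) - fp a)"
    unfolding sum_subtractf c2 c3 using c1 by simp
  have "G_act_fun act (Suc n) a (fp a) - fp a \<in> {G_act_fun act (Suc n) g f - f | g f. f \<in> Cc_infty (Gpow (Suc n))}" for a
    using fp_cc by blast
  then have "(\<Sum>a\<in>A. G_act_fun act (Suc n) a (fp a) - fp a) \<in> fun_cspan sc {G_act_fun act (Suc n) g f - f | g f. f \<in> Cc_infty (Gpow (Suc n))}"
    by (intro FM.span_sum FM.span_base)
  then show ?thesis using c4 by simp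
qed

lemma span_ker:
  fixes M :: "'g::{topological_group_add,t2_space} measure"
    and sc :: "complex \<Rightarrow> 'v::ab_group_add \<Rightarrow> 'v"
  assumes lg: "l_group TYPE('g)" and hm: "left_haar_measure M" and sm: "smooth_module sc act"
  shows "fun_cspan sc {G_act_fun act (Suc n) g f - f | g f. f \<in> Cc_infty (Gpow (Suc n))}
     \<subseteq> {f \<in> Cc_infty (Gpow (Suc n)). T_op sc M act n f = (\<lambda>_. 0)}"
proof -
  have vs: "vector_space sc" using sm_parts(1)[OF sm] .
  interpret vs: vector_space sc by fact
  interpret FM: module "\<lambda>c (f::(nat \<Rightarrow> 'g) \<Rightarrow> 'v) x. sc c (f x)" by (rule fun_module[OF vs])
  let ?Ker = "{f \<in> Cc_infty (Gpow (Suc n)). T_op sc M act n f = (\<lambda>_. 0)}"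
  have gens: "{G_act_fun act (Suc n) g f - f | g f. f \<in> Cc_infty (Gpow (Suc n))} \<subseteq> ?Ker"
  proof
    fix u assume "u \<in> {G_act_fun act (Suc n) g f - f | g f. f \<in> Cc_infty (Gpow (Suc n))}"
    then obtain g f where u: "u = G_act_fun act (Suc n) g f - f" and f: "f \<in> Cc_infty (Gpow (Suc n))" by blast
    have Gf: "G_act_fun act (Suc n) g f \<in> Cc_infty (Gpow (Suc n))" by (rule cc_G[OF sm f])
    have mf: "(\<lambda>y. sc (-1) (f y)) \<in> Cc_infty (Gpow (Suc n))" by (rule cc_post[OF f]) simp
    have ue: "u = G_act_fun act (Suc n) g f + (\<lambda>y. sc (-1) (f y))" unfolding u by (simp add: fun_eq_iff)
    have "T_op sc M act n u = T_op sc M act n (G_act_fun act (Suc n) g f) + T_op sc M act n (\<lambda>y. sc (-1) (f y))"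
      unfolding ue by (rule T_add[OF lg hm sm Gf mf])
    also have "\<dots> = T_op sc M act n f + (\<lambda>x. sc (-1) (T_op sc M act n f x))"
      unfolding T_G[OF hm sm f] T_scale[OF lg hm sm f] ..
    also have "\<dots> = (\<lambda>_. 0)" by (simp add: fun_eq_iff)
    finally show "u \<in> ?Ker" using cc_diff[OF Gf f] u by simp
  qed
  have "FM.subspace ?Ker"
  proof (rule FM.subspaceI)
    show "0 \<in> ?Ker" using cc_zero' T_zero[OF sm] by simp
    fix x y assume x: "x \<in> ?Ker" and y: "y \<in> ?Ker"
    have xC: "x \<in> Cc_infty (Gpow (Suc n))" and Tx: "T_op sc M act n x = (\<lambda>_. 0)" using x by auto
    have yC: "y \<in> Cc_infty (Gpow (Suc n))" and Ty: "T_op sc M act n y = (\<lambda>_. 0)" using y by auto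
    have "T_op sc M act n (x + y) = (\<lambda>_. 0)" unfolding T_add[OF lg hm sm xC yC] Tx Ty by (simp add: fun_eq_iff)
    then show "x + y \<in> ?Ker" using cc_add[OF xC yC] by simp
  next
    fix c x assume x: "x \<in> ?Ker"
    have xC: "x \<in> Cc_infty (Gpow (Suc n))" and Tx: "T_op sc M act n x = (\<lambda>_. 0)" using x by auto
    have "(\<lambda>y. sc c (x y)) \<in> Cc_infty (Gpow (Suc n))" using cc_post[OF xC, of "sc c"] by simp
    moreover have "T_op sc M act n (\<lambda>y. sc c (x y)) = (\<lambda>_. 0)" unfolding T_scale[OF lg hm sm xC] Tx by simp
    ultimately show "(\<lambda>xa. sc c (x xa)) \<in> ?Ker" by simp
  qed
  then show ?thesis using FM.span_minimal[OF gens] by blast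
qed

theorem mainTheorem14:
  fixes M :: "'g::{topological_group_add,t2_space} measure"
    and sc :: "complex \<Rightarrow> 'v::ab_group_add \<Rightarrow> 'v"
    and act :: "'g \<Rightarrow> 'v \<Rightarrow> 'v"
    and n :: nat
  assumes "l_group TYPE('g)"
    and "left_haar_measure M"
    and "smooth_module sc act"
    and "n \<ge> 1"
  shows "T_op sc M act n ` Cc_infty (Gpow (Suc n)) = Cc_infty (Gpow n) \<and>
         {f \<in> Cc_infty (Gpow (Suc n)). T_op sc M act n f = (\<lambda>_. 0)}
         = fun_cspan sc {G_act_fun act (Suc n) g f - f | g f. f \<in> Cc_infty (Gpow (Suc n))}"
proof
  show "T_op sc M act n ` Cc_infty (Gpow (Suc n)) = Cc_infty (Gpow n)"
  proof
    show "T_op sc M act n ` Cc_infty (Gpow (Suc n)) \<subseteq> Cc_infty (Gpow n)"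
      using T_in_Cc[OF assms(1,2,3)] by blast
    show "Cc_infty (Gpow n) \<subseteq> T_op sc M act n ` Cc_infty (Gpow (Suc n))"
    proof
      fix \<phi> :: "(nat \<Rightarrow> 'g) \<Rightarrow> 'v" assume "\<phi> \<in> Cc_infty (Gpow n)"
      then obtain f where "f \<in> Cc_infty (Gpow (Suc n))" "T_op sc M act n f = \<phi>"
        using T_surj[OF assms(1,2,3)] by blast
      then show "\<phi> \<in> T_op sc M act n ` Cc_infty (Gpow (Suc n))" by blast
    qed
  qed
  show "{f \<in> Cc_infty (Gpow (Suc n)). T_op sc M act n f = (\<lambda>_. 0)}
         = fun_cspan sc {G_act_fun act (Suc n) g f - f | g f. f \<in> Cc_infty (Gpow (Suc n))}"
  proof
    show "{f \<in> Cc_infty (Gpow (Suc n)). T_op sc M act n f = (\<lambda>_. 0)}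
         \<subseteq> fun_cspan sc {G_act_fun act (Suc n) g f - f | g f. f \<in> Cc_infty (Gpow (Suc n))}"
      using ker_span[OF assms(1,2,3)] by blast
    show "fun_cspan sc {G_act_fun act (Suc n) g f - f | g f. f \<in> Cc_infty (Gpow (Suc n))}
         \<subseteq> {f \<in> Cc_infty (Gpow (Suc n)). T_op sc M act n f = (\<lambda>_. 0)}"
      by (rule span_ker[OF assms(1,2,3)])
  qed
qed

end
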